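(* Let $\mathcal{H}_\ell,\mathcal{H}_r$ be Hilbert spaces, $\mathcal{H}_S$ a finite-dimensional Hilbert space, $H_\ell,H_S,H_r$ self-adjoint operators on $\mathcal{H}_\ell,\mathcal{H}_S,\mathcal{H}_r$, and $\chi_\ell\in\mathcal{H}_\ell$, $\chi_r\in\mathcal{H}_r$, $\delta_\ell,\delta_r\in\mathcal{H}_S$ non-zero vectors, with $(\delta_\ell,(H_S-E)^{-1}\delta_r)\not\equiv0$ and $(\chi_\ell,\chi_r,\delta_\ell,\delta_r)$ a cyclic family for $H_0=H_\ell+H_S+H_r$ on $\mathcal{H}=\mathcal{H}_\ell\oplus\mathcal{H}_S\oplus\mathcal{H}_r$. Let $H_{\lambda,\nu}=H_0+\lambda[(\chi_\ell,\cdot)\delta_\ell+(\delta_\ell,\cdot)\chi_\ell]+\nu[(\chi_r,\cdot)\delta_r+(\delta_r,\cdot)\chi_r]$. Then: (1) $C^{(0)}_{\varphi,\psi}\subset\mathcal{N}$ for $\varphi,\psi\in\{\chi_\ell,\delta_\ell\}$, $\varphi\ne\psi$; (2) for $\nu\neq0$, $$C^{(\nu)}_{\chi_\ell,\delta_\ell}\setminus\mathcal{N}=\Big\{E\in\mathbb{R}:\lim_{\epsilon\searrow0}|G_0(\chi_\ell,\chi_\ell,E+i\epsilon)|=\infty,\ \lim_{\epsilon\searrow0}G_0(\chi_r,\chi_r,E+i\epsilon)=\frac{G_0(\delta_\ell,\delta_\ell,E)}{\nu^2d(E)}\Big\};$$ (3) for $\nu\neq0$, $$C^{(\nu)}_{\delta_\ell,\chi_\ell}\setminus\mathcal{N}=\Big\{E\in\mathbb{R}:\lim_{\epsilon\searrow0}|G_0(\chi_\ell,\chi_\ell,E+i\epsilon)|=0,\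 \lim_{\epsilon\searrow0}G_0(\chi_r,\chi_r,E+i\epsilon)=\frac{1}{\nu^2G_0(\delta_r,\delta_r,E)}\Big\}.$$
   Context: $G_{\lambda,\nu}(\varphi,\psi,z)=(\varphi,(H_{\lambda,\nu}-z)^{-1}\psi)$ for $z\in\mathbb{C}\setminus\mathbb{R}$, $G_0=G_{0,0}$; for $E\in\mathbb{R}\setminus\sigma(H_S)$ and $\varphi,\psi\in\mathcal{H}_S$, $G_0(\varphi,\psi,E)=(\varphi,(H_S-E)^{-1}\psi)$. For $E\in\mathbb{R}\setminus\sigma(H_S)$, $d(E)=G_0(\delta_\ell,\delta_\ell,E)G_0(\delta_r,\delta_r,E)-G_0(\delta_\ell,\delta_r,E)G_0(\delta_r,\delta_\ell,E)$. $\mathcal{N}=\{E\in\mathbb{R}\setminus\sigma(H_S): G_0(\delta_\ell,\delta_\ell,E)G_0(\delta_r,\delta_r,E)G_0(\delta_\ell,\delta_r,E)d(E)=0\}\cup\sigma(H_S)$. For $\varphi,\psi\in\{\chi_\ell,\delta_\ell\}$, $\varphi\ne\psi$, $C^{(\nu)}_{\varphi,\psi}=\{E\in\mathbb{R}:\lim_{\epsilon\searrow0}|G_{0,\nu}(\varphi,\varphi,E+i\epsilon)|=\infty,\ \lim_{\epsilon\searrow0}G_{0,\nu}(\psi,\psi,E+i\epsilon)=0\}$. *)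

theory Defs
  imports "HOL-Analysis.Analysis"
begin

text \<open>A complex Hilbert space is modelled as a real Hilbert space (real inner product
 space that is complete) together with the action of the imaginary unit, a real-linear
 isometry J with J (J x) = - x.  The complex inner product (antilinear in the first
 argument, as in the paper) is cinner x y = (x . y) + i (J x . y).\<close>

class chilbert = real_inner + complete_space +
  fixes imult :: "'a \<Rightarrow> 'a"
  assumes imult_add: "imult (x + y) = imult x + imult y"
    and imult_scaleR: "imult (r *\<^sub>R x) = r *\<^sub>R imult x"
    and imult_imult: "imult (imult x) = - x"
    and imult_inner: "inner (imult x) (imult y) = inner x y"

instantiation prod :: (chilbert, chilbert) chilbert
begin
definition imult_prod_def: "imult p = (imult (fst p), imult (snd p))"
instance
  by standard (auto simp: imult_prod_def imult_add imult_scaleR imult_imult imult_inner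
      inner_prod_def)
end

definition cscale :: "complex \<Rightarrow> 'a::chilbert \<Rightarrow> 'a" where
  "cscale c x = Re c *\<^sub>R x + Im c *\<^sub>R imult x"

definition cinner :: "'a::chilbert \<Rightarrow> 'a \<Rightarrow> complex" where
  "cinner x y = Complex (inner x y) (inner (imult x) y)"

definition cspan :: "'a::chilbert set \<Rightarrow> 'a set" where
  "cspan S = span (S \<union> imult ` S)"

definition finite_dim :: "'a::chilbert itself \<Rightarrow> bool" where
  "finite_dim _ \<longleftrightarrow> (\<exists>B::'a set. finite B \<and> span B = UNIV)"

text \<open>An operator is given by a domain D and a map A (only its values on D matter).
 Self-adjoint: dense complex-linear domain, A complex-linear on D, and A equals its
 adjoint (symmetric, and the adjoint domain is contained in D).\<close>

definition self_adjoint_op :: "'a::chilbert set \<Rightarrow> ('a \<Rightarrow> 'a) \<Rightarrow> bool" where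
  "self_adjoint_op D A \<longleftrightarrow>
     0 \<in> D \<and> (\<forall>x\<in>D. \<forall>y\<in>D. \<forall>c. cscale c x + y \<in> D) \<and> closure D = UNIV \<and>
     (\<forall>x\<in>D. \<forall>y\<in>D. \<forall>c. A (cscale c x + y) = cscale c (A x) + A y) \<and>
     (\<forall>x\<in>D. \<forall>y\<in>D. cinner (A x) y = cinner x (A y)) \<and>
     (\<forall>y z. (\<forall>x\<in>D. cinner (A x) y = cinner x z) \<longrightarrow> y \<in> D \<and> A y = z)"

definition op_spectrum :: "'a::chilbert set \<Rightarrow> ('a \<Rightarrow> 'a) \<Rightarrow> complex set" where
  "op_spectrum D A = {z. \<not> (\<forall>\<psi>. \<exists>!u. u \<in> D \<and> A u - cscale z u = \<psi>)}"

definition real_spectrum :: "'a::chilbert set \<Rightarrow> ('a \<Rightarrow> 'a) \<Rightarrow> real set" where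
  "real_spectrum D A = {E. complex_of_real E \<in> op_spectrum D A}"

definition resolvent :: "'a::chilbert set \<Rightarrow> ('a \<Rightarrow> 'a) \<Rightarrow> complex \<Rightarrow> 'a \<Rightarrow> 'a" where
  "resolvent D A z \<psi> = (THE u. u \<in> D \<and> A u - cscale z u = \<psi>)"

definition green :: "'a::chilbert set \<Rightarrow> ('a \<Rightarrow> 'a) \<Rightarrow> 'a \<Rightarrow> 'a \<Rightarrow> complex \<Rightarrow> complex" where
  "green D A \<phi> \<psi> z = cinner \<phi> (resolvent D A z \<psi>)"

text \<open>H = H_l (+) H_S (+) H_r, realised as the product type 'l \<times> 's \<times> 'r.\<close>

definition emb_l :: "'l::chilbert \<Rightarrow> 'l \<times> 's::chilbert \<times> 'r::chilbert" where
  "emb_l x = (x, 0, 0)"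
definition emb_S :: "'s::chilbert \<Rightarrow> 'l::chilbert \<times> 's \<times> 'r::chilbert" where
  "emb_S x = (0, x, 0)"
definition emb_r :: "'r::chilbert \<Rightarrow> 'l::chilbert \<times> 's::chilbert \<times> 'r" where
  "emb_r x = (0, 0, x)"

definition dom0 :: "'l::chilbert set \<Rightarrow> 'r::chilbert set \<Rightarrow> ('l \<times> 's::chilbert \<times> 'r) set" where
  "dom0 Dl Dr = Dl \<times> UNIV \<times> Dr"

definition H0 :: "('l::chilbert \<Rightarrow> 'l) \<Rightarrow> ('s::chilbert \<Rightarrow> 's) \<Rightarrow> ('r::chilbert \<Rightarrow> 'r)
     \<Rightarrow> 'l \<times> 's \<times> 'r \<Rightarrow> 'l \<times> 's \<times> 'r" where
  "H0 Hl HS Hr p = (Hl (fst p), HS (fst (snd p)), Hr (snd (snd p)))"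

definition Hpert :: "('l::chilbert \<Rightarrow> 'l) \<Rightarrow> ('s::chilbert \<Rightarrow> 's) \<Rightarrow> ('r::chilbert \<Rightarrow> 'r)
     \<Rightarrow> 'l \<Rightarrow> 'r \<Rightarrow> 's \<Rightarrow> 's \<Rightarrow> real \<Rightarrow> real \<Rightarrow> 'l \<times> 's \<times> 'r \<Rightarrow> 'l \<times> 's \<times> 'r" where
  "Hpert Hl HS Hr chil chir dell delr lam nu p =
     H0 Hl HS Hr p
     + lam *\<^sub>R (cscale (cinner (emb_l chil) p) (emb_S dell) + cscale (cinner (emb_S dell) p) (emb_l chil))
     + nu *\<^sub>R (cscale (cinner (emb_r chir) p) (emb_S delr) + cscale (cinner (emb_S delr) p) (emb_r chir))"

definition cyclic_family :: "'a::chilbert set \<Rightarrow> ('a \<Rightarrow> 'a) \<Rightarrow> 'a set \<Rightarrow> bool" where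
  "cyclic_family D A F \<longleftrightarrow>
     closure (cspan {resolvent D A z v | z v. Im z \<noteq> 0 \<and> v \<in> F}) = UNIV"

text \<open>d(E) and the exceptional set N (G_0 restricted to H_S is the resolvent of H_S).\<close>
definition dfun :: "('s::chilbert \<Rightarrow> 's) \<Rightarrow> 's \<Rightarrow> 's \<Rightarrow> real \<Rightarrow> complex" where
  "dfun HS dell delr E =
     green UNIV HS dell dell (of_real E) * green UNIV HS delr delr (of_real E)
     - green UNIV HS dell delr (of_real E) * green UNIV HS delr dell (of_real E)"

definition Nset :: "('s::chilbert \<Rightarrow> 's) \<Rightarrow> 's \<Rightarrow> 's \<Rightarrow> real set" where
  "Nset HS dell delr =
     {E. E \<notin> real_spectrum UNIV HS \<and>
         green UNIV HS dell dell (of_real E) * green UNIV HS delr delr (of_real E)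
         * green UNIV HS dell delr (of_real E) * dfun HS dell delr E = 0}
     \<union> real_spectrum UNIV HS"

definition Cset :: "('a::chilbert \<Rightarrow> 'a) \<Rightarrow> 'a set \<Rightarrow> 'a \<Rightarrow> 'a \<Rightarrow> real set" where
  "Cset A D \<phi> \<psi> = {E.
     filterlim (\<lambda>\<epsilon>. cmod (green D A \<phi> \<phi> (Complex E \<epsilon>))) at_top (at_right 0) \<and>
     ((\<lambda>\<epsilon>. green D A \<psi> \<psi> (Complex E \<epsilon>)) \<longlongrightarrow> 0) (at_right 0)}"

end

theory Submission
  imports Defs
begin


lemma imult_linear: "linear (imult :: 'a::chilbert \<Rightarrow> 'a)"
  by (rule linearI) (simp_all add: imult_add imult_scaleR)

lemma imult_zero[simp]: "imult 0 = (0::'a::chilbert)"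
  using linear_0[OF imult_linear] .
lemma imult_minus[simp]: "imult (- x) = - imult (x::'a::chilbert)"
  using linear_neg[OF imult_linear] .
lemma imult_diff: "imult (x - y) = imult x - imult (y::'a::chilbert)"
  using linear_diff[OF imult_linear] .
lemma norm_imult[simp]: "norm (imult x) = norm (x::'a::chilbert)"
  by (simp add: norm_eq_sqrt_inner imult_inner)
lemma inner_imult_left: "inner (imult x) y = - inner x (imult (y::'a::chilbert))"
proof -
  have "inner (imult x) y = inner (imult (imult x)) (imult y)" by (simp add: imult_inner)
  thus ?thesis by (simp add: imult_imult)
qed
lemma inner_imult_right: "inner x (imult y) = - inner (imult x) (y::'a::chilbert)"
  by (simp add: inner_imult_left)
lemma inner_imult_self[simp]: "inner (imult x) x = (0::real)" for x :: "'a::chilbert"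
  using inner_imult_left[of x x] by (simp add: inner_commute)

lemmas imult_simps = imult_add imult_scaleR imult_imult imult_inner imult_diff

lemma cscale_add_left: "cscale (a + b) x = cscale a x + cscale b x"
  by (simp add: cscale_def algebra_simps)
lemma cscale_add_right: "cscale c (x + y) = cscale c x + cscale c y"
  by (simp add: cscale_def algebra_simps imult_add)
lemma cscale_diff_right: "cscale c (x - y) = cscale c x - cscale c y"
  by (simp add: cscale_def algebra_simps imult_diff)
lemma cscale_minus_right: "cscale c (- y) = - cscale c y"
  by (simp add: cscale_def algebra_simps)
lemma cscale_diff_left: "cscale (a - b) x = cscale a x - cscale b x"
  by (simp add: cscale_def algebra_simps)
lemma cscale_minus_left: "cscale (- a) x = - cscale a x"
  by (simp add: cscale_def algebra_simps)
lemma cscale_mult: "cscale a (cscale b x) = cscale (a * b) x"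
  by (simp add: cscale_def algebra_simps imult_add imult_scaleR imult_imult)
lemma cscale_one[simp]: "cscale 1 x = x"
  by (simp add: cscale_def)
lemma cscale_zero_left[simp]: "cscale 0 x = 0"
  by (simp add: cscale_def)
lemma cscale_zero_right[simp]: "cscale c 0 = 0"
  by (simp add: cscale_def)
lemma cscale_of_real[simp]: "cscale (of_real r) x = r *\<^sub>R x"
  by (simp add: cscale_def)
lemma cscale_scaleR: "cscale c (r *\<^sub>R x) = r *\<^sub>R cscale c x"
  by (simp add: cscale_def imult_scaleR algebra_simps)
lemma scaleR_cscale: "r *\<^sub>R cscale c x = cscale (of_real r * c) x"
  by (simp add: cscale_def scaleR_add_right)
lemma cscale_ii: "cscale \<i> x = imult x"
  by (simp add: cscale_def)
lemma imult_cscale: "imult (cscale c x) = cscale c (imult x)"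
  by (simp add: cscale_def imult_add imult_scaleR)
lemma norm_cscale: "norm (cscale c x) = cmod c * norm x"
proof -
  have "inner (cscale c x) (cscale c x) = ((Re c)^2 + (Im c)^2) * inner x x"
    by (simp add: cscale_def inner_add_left inner_add_right
        imult_inner inner_commute[of x "imult x"] algebra_simps power2_eq_square)
  also have "\<dots> = (cmod c)^2 * inner x x" by (simp add: cmod_power2)
  finally have "inner (cscale c x) (cscale c x) = (cmod c)^2 * inner x x" .
  thus ?thesis by (simp add: norm_eq_sqrt_inner real_sqrt_mult)
qed

lemma Re_cinner[simp]: "Re (cinner x y) = inner x y" by (simp add: cinner_def)
lemma Im_cinner[simp]: "Im (cinner x y) = inner (imult x) y" by (simp add: cinner_def)

lemma cinner_commute: "cinner y x = cnj (cinner x y)"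
proof -
  have "inner (imult y) x = - inner (imult x) y"
    using inner_imult_left[of y x] by (simp add: inner_commute)
  thus ?thesis by (simp add: complex_eq_iff inner_commute)
qed
lemma cinner_add_right: "cinner x (y + z) = cinner x y + cinner x z"
  by (simp add: complex_eq_iff inner_add_right)
lemma cinner_add_left: "cinner (x + y) z = cinner x z + cinner y z"
  by (simp add: complex_eq_iff inner_add_left imult_add)
lemma cinner_diff_right: "cinner x (y - z) = cinner x y - cinner x z"
  by (simp add: complex_eq_iff inner_diff_right)
lemma cinner_diff_left: "cinner (x - y) z = cinner x z - cinner y z"
  by (simp add: complex_eq_iff inner_diff_left imult_diff)
lemma cinner_minus_right: "cinner x (- y) = - cinner x y"
  by (simp add: complex_eq_iff)
lemma cinner_zero_right[simp]: "cinner x 0 = 0"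
  by (simp add: complex_eq_iff)
lemma cinner_zero_left[simp]: "cinner 0 x = 0"
  by (simp add: complex_eq_iff)
lemma cinner_cscale_right: "cinner x (cscale c y) = c * cinner x y"
  by (simp add: complex_eq_iff cscale_def inner_add_right inner_imult_right imult_inner imult_imult)
lemma cinner_cscale_left: "cinner (cscale c x) y = cnj c * cinner x y"
  by (subst cinner_commute, subst cinner_cscale_right, subst cinner_commute) simp
lemma cinner_scaleR_left: "cinner (r *\<^sub>R x) y = of_real r * cinner x y"
  using cinner_cscale_left[of "of_real r" x y] by simp
lemma cinner_scaleR_right: "cinner x (r *\<^sub>R y) = of_real r * cinner x y"
  using cinner_cscale_right[of x "of_real r" y] by simp
lemma cinner_self: "cinner x x = of_real (norm x ^ 2)"
  by (simp add: complex_eq_iff power2_norm_eq_inner)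
lemma abs_Im_cinner: "\<bar>Im (cinner x y)\<bar> \<le> norm x * norm y"
  using Cauchy_Schwarz_ineq2[of "imult x" y] by simp
lemma abs_Re_cinner: "\<bar>Re (cinner x y)\<bar> \<le> norm x * norm y"
  using Cauchy_Schwarz_ineq2[of x y] by simp
lemma cmod_cinner: "cmod (cinner x y) \<le> 2 * (norm x * norm y)"
  using cmod_le[of "cinner x y"] abs_Im_cinner[of x y] abs_Re_cinner[of x y] by linarith

lemma tendsto_cinner_right:
  assumes "(f \<longlongrightarrow> l) F" shows "((\<lambda>n. cinner a (f n)) \<longlongrightarrow> cinner a l) F"
proof -
  have "((\<lambda>n. Complex (inner a (f n)) (inner (imult a) (f n))) \<longlongrightarrow>
          Complex (inner a l) (inner (imult a) l)) F"
    by (intro tendsto_Complex tendsto_inner tendsto_const assms)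
  thus ?thesis by (simp add: cinner_def)
qed

lemma bounded_linear_imult: "bounded_linear (imult :: 'a::chilbert \<Rightarrow> 'a)"
  by (rule bounded_linear_intro[where K=1]) (simp_all add: imult_add imult_scaleR)

lemma tendsto_cscale:
  assumes "(f \<longlongrightarrow> l) F" shows "((\<lambda>n. cscale c (f n)) \<longlongrightarrow> cscale c l) F"
  unfolding cscale_def
  by (intro tendsto_intros assms bounded_linear.tendsto[OF bounded_linear_imult])

lemma inner_prod: "inner (a, b) (c, d) = inner a c + inner b d"
  by (simp add: inner_prod_def)
lemma cinner_prod[simp]: "cinner (a, b) (c, d) = cinner a c + cinner b d"
  by (simp add: complex_eq_iff inner_prod imult_prod_def)
lemma cscale_prod[simp]: "cscale z (a, b) = (cscale z a, cscale z b)"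
  by (simp add: cscale_def imult_prod_def)



lemma parallelogram:
  fixes a b :: "'a::real_inner"
  shows "norm (a - b)^2 + norm (a + b)^2 = 2 * norm a^2 + 2 * norm b^2"
  by (simp add: power2_norm_eq_inner inner_add_left inner_add_right inner_diff_left
      inner_diff_right inner_commute[of b a])

lemma proj_exists:
  fixes M :: "'a::{real_inner,complete_space} set"
  assumes cl: "closed M" and sub: "subspace M"
  shows "\<exists>m\<in>M. \<forall>x\<in>M. inner (p - m) x = 0"
proof -
  have M0: "0 \<in> M" using sub by (simp add: subspace_0)
  define S where "S = (\<lambda>m. norm (p - m)) ` M"
  define d where "d = Inf S"
  have Sne: "S \<noteq> {}" using M0 by (auto simp: S_def)
  have bdd: "bdd_below S" unfolding S_def bdd_below_def by (intro exI[of _ 0]) auto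
  have d_le: "d \<le> norm (p - m)" if "m \<in> M" for m
    unfolding d_def using bdd that by (auto simp: S_def intro!: cInf_lower)
  have d0: "0 \<le> d" using d_le[OF M0] norm_ge_zero[of p] d_def
    by (metis Sne S_def cInf_greatest imageE norm_ge_zero)
  have "\<forall>n. \<exists>m\<in>M. norm (p - m) < d + inverse (real (Suc n))"
  proof
    fix n
    have "Inf S < d + inverse (real (Suc n))" by (simp add: d_def)
    from cInf_lessD[OF Sne this] show "\<exists>m\<in>M. norm (p - m) < d + inverse (real (Suc n))"
      by (auto simp: S_def)
  qed
  then obtain f where fM: "\<And>n. f n \<in> M" and fd: "\<And>n. norm (p - f n) < d + inverse (real (Suc n))"
    by metis
  define e where "e n = inverse (real (Suc n))" for n
  have e_pos: "0 < e n" for n by (simp add: e_def)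
  have e_le1: "e n \<le> 1" for n unfolding e_def by (rule inverse_le_1_iff[THEN iffD2]) auto
  have key: "norm (f m - f k)^2 \<le> (4 * d + 2) * (e m + e k)" for m k
  proof -
    let ?a = "p - f m" and ?b = "p - f k"
    have mid: "(1/2) *\<^sub>R (f m + f k) \<in> M"
      using fM sub by (simp add: subspace_add subspace_scale)
    have "d \<le> norm (p - (1/2) *\<^sub>R (f m + f k))" by (rule d_le[OF mid])
    moreover have "?a + ?b = 2 *\<^sub>R (p - (1/2) *\<^sub>R (f m + f k))"
      by (simp add: algebra_simps scaleR_2)
    ultimately have h1: "2 * d \<le> norm (?a + ?b)" by simp
    have h1': "(2*d)^2 \<le> norm (?a + ?b)^2" using h1 d0 by (intro power_mono) auto
    have ha: "norm ?a \<le> d + e m" using fd[of m] by (simp add: e_def)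
    have hb: "norm ?b \<le> d + e k" using fd[of k] by (simp add: e_def)
    have ha2: "norm ?a ^2 \<le> (d + e m)^2" using ha by (simp add: power_mono)
    have hb2: "norm ?b ^2 \<le> (d + e k)^2" using hb by (simp add: power_mono)
    have par: "norm (?a - ?b)^2 + norm (?a + ?b)^2 = 2 * norm ?a^2 + 2 * norm ?b^2"
      by (rule parallelogram)
    have eq: "?a - ?b = f k - f m" by simp
    have "norm (f m - f k)^2 = norm (?a - ?b)^2" by (simp add: eq norm_minus_commute)
    also have "\<dots> \<le> 2 * (d + e m)^2 + 2 * (d + e k)^2 - (2*d)^2"
      using par h1' ha2 hb2 by linarith
    also have "\<dots> = 4 * d * (e m + e k) + 2 * (e m * e m) + 2 * (e k * e k)"
      by (simp add: power2_eq_square algebra_simps)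
    also have "\<dots> \<le> 4 * d * (e m + e k) + 2 * e m + 2 * e k"
      using e_le1[of m] e_le1[of k] e_pos[of m] e_pos[of k]
      by (intro add_mono) (auto intro: mult_left_le_one_le less_imp_le)
    also have "\<dots> = (4 * d + 2) * (e m + e k)" by (simp add: algebra_simps)
    finally show ?thesis .
  qed
  have cauchy: "Cauchy f"
  proof (rule CauchyI)
    fix r :: real assume r: "0 < r"
    obtain N :: nat where N: "(4 * d + 2) * 2 / r^2 < real N"
      using reals_Archimedean2 by blast
    show "\<exists>N. \<forall>m\<ge>N. \<forall>n\<ge>N. norm (f m - f n) < r"
    proof (intro exI allI impI)
      fix m n assume m: "m \<ge> N" and n: "n \<ge> N"
      have em: "e m \<le> inverse (real (Suc N))" using m by (simp add: e_def)
      have en: "e n \<le> inverse (real (Suc N))" using n by (simp add: e_def)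
      have "(4 * d + 2) * (e m + e n) \<le> (4 * d + 2) * (2 * inverse (real (Suc N)))"
        using em en d0 by (intro mult_left_mono) auto
      also have "\<dots> < r^2"
      proof -
        have "(4 * d + 2) * 2 < r^2 * real N" using N r by (simp add: field_simps)
        also have "\<dots> \<le> r^2 * real (Suc N)" using r by simp
        finally have "(4 * d + 2) * 2 < r^2 * real (Suc N)" .
        thus ?thesis by (simp add: field_simps)
      qed
      finally have "norm (f m - f n)^2 < r^2" using key[of m n] by linarith
      thus "norm (f m - f n) < r" using r by (simp add: power_less_imp_less_base less_imp_le)
    qed
  qed
  then obtain m where lim: "f \<longlonglongrightarrow> m" using Cauchy_convergent_iff convergent_def by blast
  have mM: "m \<in> M" using cl fM lim closed_sequential_limits by blast
  have "norm (p - m) \<le> d"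
  proof (rule LIMSEQ_le)
    show "(\<lambda>n. norm (p - f n)) \<longlonglongrightarrow> norm (p - m)"
      by (intro tendsto_intros lim)
    show "(\<lambda>n. d + inverse (real (Suc n))) \<longlonglongrightarrow> d" by (rule LIMSEQ_inverse_real_of_nat_add)
    show "\<exists>N. \<forall>n\<ge>N. norm (p - f n) \<le> d + inverse (real (Suc n))"
      using fd less_imp_le by blast
  qed
  hence best: "norm (p - m) \<le> norm (p - m')" if "m' \<in> M" for m'
    using d_le[OF that] by linarith
  have "inner (p - m) x = 0" if xM: "x \<in> M" for x
  proof -
    define y where "y = p - m"
    define a where "a = inner y x"
    define b where "b = inner x x"
    have b0: "0 \<le> b" by (simp add: b_def)
    define t where "t = a / (b + 1)"
    have "m + t *\<^sub>R x \<in> M" using mM xM sub by (simp add: subspace_add subspace_scale)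
    from best[OF this] have "norm y ^2 \<le> norm (y - t *\<^sub>R x)^2"
      by (simp add: y_def diff_diff_eq power_mono)
    also have "norm (y - t *\<^sub>R x)^2 = norm y^2 - 2 * t * a + t^2 * b"
      unfolding power2_norm_eq_inner
      by (simp add: inner_diff_left inner_diff_right a_def b_def
          inner_commute[of x y] power2_eq_square algebra_simps)
    finally have "2 * t * a \<le> t^2 * b" by simp
    hence h: "2 * t * a * (b+1)^2 \<le> t^2 * b * (b+1)^2"
      by (intro mult_right_mono) auto
    have tb: "t * (b+1) = a" using b0 by (simp add: t_def)
    have "2 * t * a * (b+1)^2 = 2 * a * (t * (b+1)) * (b+1)"
      by (simp add: power2_eq_square algebra_simps)
    hence 1: "2 * t * a * (b+1)^2 = 2 * a * a * (b+1)" by (simp only: tb)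
    have "t^2 * b * (b+1)^2 = (t * (b+1)) * (t * (b+1)) * b"
      by (simp add: power2_eq_square algebra_simps)
    hence 2: "t^2 * b * (b+1)^2 = a * a * b" by (simp only: tb)
    have "2 * a * a * (b+1) \<le> a * a * b" using h 1 2 by simp
    hence "a * a * (b + 2) \<le> 0" by (simp add: algebra_simps)
    moreover have "0 \<le> a * a" by simp
    ultimately have "a * a = 0" using b0
      by (metis add_nonneg_pos mult_le_0_iff order_antisym_conv zero_less_numeral not_le)
    thus ?thesis by (simp add: a_def y_def)
  qed
  with mM show ?thesis by blast
qed



locale sa =
  fixes D :: "'a::chilbert set" and A :: "'a \<Rightarrow> 'a"
  assumes sa: "self_adjoint_op D A"
begin

lemmas U = sa[unfolded self_adjoint_op_def]
lemma D0: "0 \<in> D" using U by (rule conjunct1)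
lemma cl: "closure D = UNIV" using U by blast
lemma Dlin: "x \<in> D \<Longrightarrow> y \<in> D \<Longrightarrow> cscale c x + y \<in> D"
  using U[THEN conjunct2, THEN conjunct1] by blast
lemma Alin: "x \<in> D \<Longrightarrow> y \<in> D \<Longrightarrow> A (cscale c x + y) = cscale c (A x) + A y"
  using U[THEN conjunct2, THEN conjunct2, THEN conjunct2, THEN conjunct1] by blast
lemma sym: "x \<in> D \<Longrightarrow> y \<in> D \<Longrightarrow> cinner (A x) y = cinner x (A y)"
  using U[THEN conjunct2, THEN conjunct2, THEN conjunct2, THEN conjunct2, THEN conjunct1] by blast
lemma adj: "(\<forall>x\<in>D. cinner (A x) y = cinner x z) \<Longrightarrow> y \<in> D \<and> A y = z"
  using U[THEN conjunct2, THEN conjunct2, THEN conjunct2, THEN conjunct2, THEN conjunct2] by blast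

lemma Dadd: "x \<in> D \<Longrightarrow> y \<in> D \<Longrightarrow> x + y \<in> D"
  using Dlin[of x y 1] by simp
lemma Dscale: "x \<in> D \<Longrightarrow> cscale c x \<in> D"
  using Dlin[of x 0 c] D0 by simp
lemma Ddiff: "x \<in> D \<Longrightarrow> y \<in> D \<Longrightarrow> x - y \<in> D"
  using Dlin[of y x "-1"] by (simp add: cscale_minus_left)
lemma A0: "A 0 = 0"
  using Alin[OF D0 D0, of 1] by simp
lemma Aadd: "x \<in> D \<Longrightarrow> y \<in> D \<Longrightarrow> A (x + y) = A x + A y"
  using Alin[of x y 1] by simp
lemma Ascale: "x \<in> D \<Longrightarrow> A (cscale c x) = cscale c (A x)"
  using Alin[of x 0 c] D0 A0 by simp
lemma Adiff: "x \<in> D \<Longrightarrow> y \<in> D \<Longrightarrow> A (x - y) = A x - A y"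
  using Alin[of y x "-1"] by (simp add: cscale_minus_left)

lemma real_diag: "Im (cinner u (A u)) = 0" if "u \<in> D"
proof -
  have "cinner u (A u) = cnj (cinner u (A u))"
    using sym[OF that that] cinner_commute[of u "A u"] by simp
  thus ?thesis by (metis Reals_cnj_iff complex_is_Real_iff)
qed

lemma lower: "\<bar>Im z\<bar> * norm u \<le> norm (A u - cscale z u)" if u: "u \<in> D"
proof -
  define w where "w = A u - cscale z u"
  have "cinner u w = cinner u (A u) - z * cinner u u"
    by (simp add: w_def cinner_diff_right cinner_cscale_right)
  hence "Im (cinner u w) = - Im z * norm u ^ 2"
    using real_diag[OF u] by (simp add: cinner_self)
  hence "\<bar>Im z\<bar> * norm u ^ 2 \<le> norm u * norm w"
    using abs_Im_cinner[of u w] by (simp add: abs_mult)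
  hence "norm u * (\<bar>Im z\<bar> * norm u) \<le> norm u * norm w"
    by (simp add: power2_eq_square algebra_simps)
  thus ?thesis unfolding w_def
    by (cases "norm u = 0") (auto simp: mult_le_cancel_left)
qed

lemma unique: "Im z \<noteq> 0 \<Longrightarrow> u \<in> D \<Longrightarrow> v \<in> D \<Longrightarrow> A u - cscale z u = A v - cscale z v \<Longrightarrow> u = v"
proof -
  assume z: "Im z \<noteq> 0" and u: "u \<in> D" and v: "v \<in> D" and eq: "A u - cscale z u = A v - cscale z v"
  have "A (u - v) - cscale z (u - v) = 0"
    using eq by (simp add: Adiff[OF u v] cscale_diff_right algebra_simps)
  with lower[OF Ddiff[OF u v], of z] have h: "\<bar>Im z\<bar> * norm (u - v) \<le> 0" by simp
  have "\<not> 0 < norm (u - v)"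
  proof
    assume "0 < norm (u - v)"
    hence "0 < \<bar>Im z\<bar> * norm (u - v)" using z by simp
    with h show False by simp
  qed
  thus ?thesis by simp
qed

lemma exists: assumes z: "Im z \<noteq> 0" shows "\<exists>u\<in>D. A u - cscale z u = \<psi>"
proof -
  define T where "T u = A u - cscale z u" for u
  define M where "M = T ` D"
  have Tadd: "T (u + v) = T u + T v" if "u \<in> D" "v \<in> D" for u v
    using that by (simp add: T_def Aadd cscale_add_right algebra_simps)
  have Tdiff: "T (u - v) = T u - T v" if "u \<in> D" "v \<in> D" for u v
    using that by (simp add: T_def Adiff cscale_diff_right algebra_simps)
  have Tscale: "T (cscale c u) = cscale c (T u)" if "u \<in> D" for u c
    using that by (simp add: T_def Ascale cscale_mult cscale_diff_right mult.commute)
  have sub: "subspace M"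
    unfolding subspace_def M_def
  proof (intro conjI ballI allI)
    show "0 \<in> T ` D" using D0 by (auto simp: T_def A0 intro!: image_eqI[of _ _ 0])
  next
    fix x y assume "x \<in> T ` D" "y \<in> T ` D"
    then obtain u v where "u \<in> D" "v \<in> D" "x = T u" "y = T v" by auto
    thus "x + y \<in> T ` D" using Tadd Dadd by (auto intro!: image_eqI[of _ _ "u + v"])
  next
    fix c :: real and x assume "x \<in> T ` D"
    then obtain u where u: "u \<in> D" "x = T u" by auto
    have "c *\<^sub>R x = T (c *\<^sub>R u)" using Tscale[OF u(1), of "of_real c"] u by simp
    moreover have "c *\<^sub>R u \<in> D" using Dscale[OF u(1), of "of_real c"] by simp
    ultimately show "c *\<^sub>R x \<in> T ` D" by blast
  qed
  have Mi: "imult x \<in> M" if xM: "x \<in> M" for x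
  proof -
    obtain u where u: "u \<in> D" "x = T u" using xM unfolding M_def by blast
    have "imult x = T (cscale \<i> u)" using Tscale[OF u(1), of \<i>] u by (simp only: cscale_ii)
    thus ?thesis using Dscale[OF u(1)] by (auto simp: M_def)
  qed
  have cl: "closed M"
    unfolding closed_sequential_limits
  proof (intro allI impI, elim conjE)
    fix x l assume xM: "\<forall>n. x n \<in> M" and xl: "x \<longlonglongrightarrow> l"
    have "\<forall>n. \<exists>v. v \<in> D \<and> x n = T v" using xM unfolding M_def by blast
    then obtain u where "\<forall>n. u n \<in> D \<and> x n = T (u n)" by metis
    hence uD: "\<And>n. u n \<in> D" and ux: "\<And>n. x n = T (u n)" by auto
    have "Cauchy u"
    proof (rule CauchyI)
      fix e :: real assume e: "0 < e"
      have "Cauchy x" using xl by (rule LIMSEQ_imp_Cauchy)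
      then obtain N where N: "\<forall>m\<ge>N. \<forall>n\<ge>N. norm (x m - x n) < e * \<bar>Im z\<bar>"
        using e z by (meson CauchyD mult_pos_pos zero_less_abs_iff)
      show "\<exists>N. \<forall>m\<ge>N. \<forall>n\<ge>N. norm (u m - u n) < e"
      proof (intro exI allI impI)
        fix m n assume "m \<ge> N" "n \<ge> N"
        hence "norm (x m - x n) < e * \<bar>Im z\<bar>" using N by blast
        moreover have "\<bar>Im z\<bar> * norm (u m - u n) \<le> norm (x m - x n)"
        proof -
          have "\<bar>Im z\<bar> * norm (u m - u n) \<le> norm (T (u m - u n))"
            using lower[OF Ddiff[OF uD uD], of z m n] by (simp only: T_def)
          also have "T (u m - u n) = x m - x n" by (simp add: Tdiff[OF uD uD] ux)
          finally show ?thesis .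
        qed
        ultimately have "\<bar>Im z\<bar> * norm (u m - u n) < \<bar>Im z\<bar> * e" by (simp add: mult.commute)
        thus "norm (u m - u n) < e" using z by simp
      qed
    qed
    then obtain v where uv: "u \<longlonglongrightarrow> v" using Cauchy_convergent_iff convergent_def by blast
    have Au: "(\<lambda>n. A (u n)) \<longlonglongrightarrow> l + cscale z v"
    proof -
      have "(\<lambda>n. x n + cscale z (u n)) \<longlonglongrightarrow> l + cscale z v"
        by (intro tendsto_add xl tendsto_cscale uv)
      thus ?thesis by (simp add: ux T_def)
    qed
    have "v \<in> D \<and> A v = l + cscale z v"
    proof (rule adj, intro ballI)
      fix y assume y: "y \<in> D"
      have 1: "(\<lambda>n. cinner (A y) (u n)) \<longlonglongrightarrow> cinner (A y) v" by (rule tendsto_cinner_right[OF uv])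
      have 2: "(\<lambda>n. cinner y (A (u n))) \<longlonglongrightarrow> cinner y (l + cscale z v)" by (rule tendsto_cinner_right[OF Au])
      have "(\<lambda>n. cinner (A y) (u n)) = (\<lambda>n. cinner y (A (u n)))" using sym[OF y uD] by auto
      with 1 2 show "cinner (A y) v = cinner y (l + cscale z v)" using LIMSEQ_unique by metis
    qed
    hence "l = T v" by (simp add: T_def)
    thus "l \<in> M" using \<open>v \<in> D \<and> _\<close> by (auto simp: M_def)
  qed
  obtain m where mM: "m \<in> M" and orth: "\<forall>x\<in>M. inner (\<psi> - m) x = 0"
    using proj_exists[OF cl sub] by blast
  define y where "y = \<psi> - m"
  have cy: "cinner x y = 0" if "x \<in> M" for x
  proof -
    have "inner x y = 0" using orth that by (simp add: y_def inner_commute)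
    moreover have "inner (imult x) y = 0" using orth Mi[OF that] by (simp add: y_def inner_commute)
    ultimately show ?thesis by (simp add: complex_eq_iff)
  qed
  have "y \<in> D \<and> A y = cscale (cnj z) y"
  proof (rule adj, intro ballI)
    fix x assume x: "x \<in> D"
    have "cinner (T x) y = 0" using cy x by (auto simp: M_def)
    hence "cinner (A x) y = cinner (cscale z x) y" by (simp add: T_def cinner_diff_left)
    thus "cinner (A x) y = cinner x (cscale (cnj z) y)"
      by (simp add: cinner_cscale_left cinner_cscale_right)
  qed
  hence "\<bar>Im (cnj z)\<bar> * norm y \<le> 0" using lower[of y "cnj z"] by simp
  hence "y = 0" using z by (simp add: mult_le_0_iff)
  hence "\<psi> \<in> M" using mM by (simp add: y_def)
  thus ?thesis by (auto simp: M_def T_def)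
qed

lemma ex1: "Im z \<noteq> 0 \<Longrightarrow> \<exists>!u. u \<in> D \<and> A u - cscale z u = \<psi>"
  using exists unique by blast

lemma resolvent_props: assumes "Im z \<noteq> 0"
  shows "resolvent D A z \<psi> \<in> D" "A (resolvent D A z \<psi>) - cscale z (resolvent D A z \<psi>) = \<psi>"
  using theI'[OF ex1[OF assms, of \<psi>]] unfolding resolvent_def by auto

lemma resolvent_eq: assumes "Im z \<noteq> 0" "u \<in> D" "A u - cscale z u = \<psi>"
  shows "resolvent D A z \<psi> = u"
  unfolding resolvent_def by (rule the1_equality[OF ex1[OF assms(1)]]) (use assms in auto)

end



lemma sa_H0:
  assumes l: "self_adjoint_op Dl Hl" and s: "self_adjoint_op UNIV HS" and r: "self_adjoint_op Dr Hr"
  shows "self_adjoint_op (dom0 Dl Dr) (H0 Hl HS Hr :: 'l::chilbert \<times> 's::chilbert \<times> 'r::chilbert \<Rightarrow> _)"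
proof -
  interpret L: sa Dl Hl by (rule sa.intro[OF l])
  interpret S: sa UNIV HS by (rule sa.intro[OF s])
  interpret R: sa Dr Hr by (rule sa.intro[OF r])
  have cl: "closure (dom0 Dl Dr :: ('l \<times> 's \<times> 'r) set) = UNIV"
  proof -
    have "closure (Dl \<times> (UNIV::'s set) \<times> Dr) = closure Dl \<times> closure (UNIV::'s set) \<times> closure Dr"
      by (simp only: closure_Times)
    also have "\<dots> = UNIV" using L.cl R.cl by simp
    finally show ?thesis by (simp only: dom0_def)
  qed
  show ?thesis unfolding self_adjoint_op_def
  proof (intro conjI ballI allI impI)
    show "0 \<in> dom0 Dl Dr" using L.D0 R.D0 by (simp add: dom0_def zero_prod_def)
  next
    fix x y :: "'l \<times> 's \<times> 'r" and c assume "x \<in> dom0 Dl Dr" "y \<in> dom0 Dl Dr"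
    thus "cscale c x + y \<in> dom0 Dl Dr"
      by (cases x, cases y) (auto simp: dom0_def L.Dlin R.Dlin)
  next
    show "closure (dom0 Dl Dr :: ('l \<times> 's \<times> 'r) set) = UNIV" by (rule cl)
  next
    fix x y :: "'l \<times> 's \<times> 'r" and c assume "x \<in> dom0 Dl Dr" "y \<in> dom0 Dl Dr"
    thus "H0 Hl HS Hr (cscale c x + y) = cscale c (H0 Hl HS Hr x) + H0 Hl HS Hr y"
      by (cases x, cases y) (auto simp: dom0_def H0_def L.Alin R.Alin S.Alin)
  next
    fix x y :: "'l \<times> 's \<times> 'r" assume "x \<in> dom0 Dl Dr" "y \<in> dom0 Dl Dr"
    thus "cinner (H0 Hl HS Hr x) y = cinner x (H0 Hl HS Hr y)"
      by (cases x, cases y) (auto simp: dom0_def H0_def L.sym R.sym S.sym)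
  next
    fix y z :: "'l \<times> 's \<times> 'r"
    assume h: "\<forall>x\<in>dom0 Dl Dr. cinner (H0 Hl HS Hr x) y = cinner x z"
    obtain y1 y2 y3 where y: "y = (y1, y2, y3)" by (cases y) auto
    obtain z1 z2 z3 where z: "z = (z1, z2, z3)" by (cases z) auto
    have 1: "y1 \<in> Dl \<and> Hl y1 = z1"
    proof (rule L.adj, intro ballI)
      fix a assume "a \<in> Dl"
      hence "(a, 0, 0) \<in> dom0 Dl Dr" using R.D0 by (simp add: dom0_def)
      from h[rule_format, OF this] show "cinner (Hl a) y1 = cinner a z1"
        by (simp add: H0_def y z S.A0 R.A0)
    qed
    have 2: "y2 \<in> UNIV \<and> HS y2 = z2"
    proof (rule S.adj, intro ballI)
      fix a :: 's
      have "(0, a, 0) \<in> dom0 Dl Dr" using R.D0 L.D0 by (simp add: dom0_def)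
      from h[rule_format, OF this] show "cinner (HS a) y2 = cinner a z2"
        by (simp add: H0_def y z L.A0 R.A0)
    qed
    have 3: "y3 \<in> Dr \<and> Hr y3 = z3"
    proof (rule R.adj, intro ballI)
      fix a assume "a \<in> Dr"
      hence "(0, 0, a) \<in> dom0 Dl Dr" using L.D0 by (simp add: dom0_def)
      from h[rule_format, OF this] show "cinner (Hr a) y3 = cinner a z3"
        by (simp add: H0_def y z S.A0 L.A0)
    qed
    show "y \<in> dom0 Dl Dr" using 1 3 by (simp add: y dom0_def)
    show "H0 Hl HS Hr y = z" using 1 2 3 by (simp add: y z H0_def)
  qed
qed

lemma sa_pert:
  assumes s: "self_adjoint_op D A"
    and lin: "\<And>x y c. V (cscale c x + y) = cscale c (V x) + V y"
    and sym: "\<And>x y. cinner (V x) y = cinner x (V y)"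
  shows "self_adjoint_op D (\<lambda>x. A x + V x)"
proof -
  interpret S: sa D A by (rule sa.intro[OF s])
  show ?thesis unfolding self_adjoint_op_def
  proof (intro conjI ballI allI impI)
    show "0 \<in> D" by (rule S.D0)
    show "closure D = UNIV" using s by (simp add: self_adjoint_op_def)
  next
    fix x y c assume "x \<in> D" "y \<in> D"
    thus "cscale c x + y \<in> D" by (rule S.Dlin)
    show "A (cscale c x + y) + V (cscale c x + y) = cscale c (A x + V x) + (A y + V y)"
      using \<open>x \<in> D\<close> \<open>y \<in> D\<close> by (simp only: S.Alin lin cscale_add_right) (simp add: algebra_simps)
    show "cinner (A x + V x) y = cinner x (A y + V y)"
      using \<open>x \<in> D\<close> \<open>y \<in> D\<close> by (simp add: S.sym sym cinner_add_left cinner_add_right)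
  next
    fix y z assume h: "\<forall>x\<in>D. cinner (A x + V x) y = cinner x z"
    have "y \<in> D \<and> A y = z - V y"
    proof (rule S.adj, intro ballI)
      fix x assume "x \<in> D"
      from h[rule_format, OF this] show "cinner (A x) y = cinner x (z - V y)"
        by (simp add: cinner_add_left cinner_diff_right sym eq_diff_eq)
    qed
    thus "y \<in> D" "A y + V y = z" by auto
  qed
qed

definition W :: "'a::chilbert \<Rightarrow> 'a \<Rightarrow> 'a \<Rightarrow> 'a" where
  "W a b p = cscale (cinner a p) b + cscale (cinner b p) a"

lemma W_lin: "W a b (cscale c x + y) = cscale c (W a b x) + W a b y"
  by (simp add: W_def cinner_add_right cinner_cscale_right cscale_add_left cscale_add_right
      cscale_mult algebra_simps)

lemma cnj_cinner: "cnj (cinner a b) = cinner b a"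
  by (simp add: cinner_commute[of b a])

lemma W_sym: "cinner (W a b x) y = cinner x (W a b y)"
  by (simp add: W_def cinner_add_left cinner_add_right cinner_cscale_left cinner_cscale_right
      cnj_cinner algebra_simps)

lemma Hpert_eq: "Hpert Hl HS Hr chil chir dell delr lam nu =
   (\<lambda>p. H0 Hl HS Hr p + (lam *\<^sub>R W (emb_l chil) (emb_S dell) p + nu *\<^sub>R W (emb_r chir) (emb_S delr) p))"
  by (rule ext) (simp add: Hpert_def W_def algebra_simps)

lemma sa_Hpert:
  assumes l: "self_adjoint_op Dl Hl" and s: "self_adjoint_op UNIV HS" and r: "self_adjoint_op Dr Hr"
  shows "self_adjoint_op (dom0 Dl Dr) (Hpert Hl HS Hr chil chir dell delr lam nu
           :: 'l::chilbert \<times> 's::chilbert \<times> 'r::chilbert \<Rightarrow> _)"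
  unfolding Hpert_eq
proof (rule sa_pert[OF sa_H0[OF l s r]])
  fix x y :: "'l \<times> 's \<times> 'r" and c
  show "lam *\<^sub>R W (emb_l chil) (emb_S dell) (cscale c x + y) + nu *\<^sub>R W (emb_r chir) (emb_S delr) (cscale c x + y) =
    cscale c (lam *\<^sub>R W (emb_l chil) (emb_S dell) x + nu *\<^sub>R W (emb_r chir) (emb_S delr) x) +
    (lam *\<^sub>R W (emb_l chil) (emb_S dell) y + nu *\<^sub>R W (emb_r chir) (emb_S delr) y)"
    by (simp only: W_lin cscale_add_right cscale_scaleR scaleR_add_right) (simp add: algebra_simps)
  show "cinner (lam *\<^sub>R W (emb_l chil) (emb_S dell) x + nu *\<^sub>R W (emb_r chir) (emb_S delr) x) y =
    cinner x (lam *\<^sub>R W (emb_l chil) (emb_S dell) y + nu *\<^sub>R W (emb_r chir) (emb_S delr) y)"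
    by (simp add: cinner_add_left cinner_add_right cinner_scaleR_left cinner_scaleR_right W_sym)
qed

lemma Hpert0: "Hpert Hl HS Hr chil chir dell delr 0 nu (a, b, c) =
   (Hl a, HS b + cscale (of_real nu * cinner chir c) delr, Hr c + cscale (of_real nu * cinner delr b) chir)"
  by (simp add: Hpert_def H0_def emb_l_def emb_r_def emb_S_def scaleR_cscale)



context sa begin

lemma herglotz: assumes z: "0 < Im z" and phi: "\<phi> \<noteq> 0"
  shows "0 < Im (green D A \<phi> \<phi> z)"
proof -
  have zi: "Im z \<noteq> 0" using z by simp
  define u where "u = resolvent D A z \<phi>"
  have uD: "u \<in> D" and ue: "A u - cscale z u = \<phi>" using resolvent_props[OF zi] by (auto simp: u_def)
  have "u \<noteq> 0" using ue phi A0 by auto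
  hence nu: "0 < norm u" by simp
  have "green D A \<phi> \<phi> z = cinner \<phi> u" by (simp add: green_def u_def)
  also have "\<dots> = cinner (A u - cscale z u) u" by (simp only: ue)
  also have "\<dots> = cinner (A u) u - cnj z * cinner u u" by (simp add: cinner_diff_left cinner_cscale_left)
  finally have "Im (green D A \<phi> \<phi> z) = Im (cinner (A u) u) + Im z * norm u ^ 2"
    by (simp add: cinner_self)
  also have "Im (cinner (A u) u) = 0"
    using real_diag[OF uD] cinner_commute[of "A u" u] by simp
  finally show ?thesis using z nu by simp
qed

lemma green_cnj:
  assumes ex: "\<And>\<psi>. \<exists>!u. u \<in> D \<and> A u - cscale (of_real E) u = \<psi>"
  shows "green D A \<phi> \<psi> (of_real E) = cnj (green D A \<psi> \<phi> (of_real E))"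
proof -
  define a where "a = resolvent D A (of_real E) \<psi>"
  define b where "b = resolvent D A (of_real E) \<phi>"
  have a: "a \<in> D" "A a - cscale (of_real E) a = \<psi>"
    using theI'[OF ex[of \<psi>]] by (auto simp: a_def resolvent_def)
  have b: "b \<in> D" "A b - cscale (of_real E) b = \<phi>"
    using theI'[OF ex[of \<phi>]] by (auto simp: b_def resolvent_def)
  have "green D A \<phi> \<psi> (of_real E) = cinner (A b - E *\<^sub>R b) a" using b by (simp add: green_def a_def)
  also have "\<dots> = cinner b (A a - E *\<^sub>R a)"
    by (simp add: cinner_diff_left cinner_diff_right cinner_scaleR_left cinner_scaleR_right sym[OF b(1) a(1)])
  also have "\<dots> = cinner b \<psi>" using a by simp
  also have "\<dots> = cnj (green D A \<psi> \<phi> (of_real E))" unfolding green_def b_def by (rule cinner_commute)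
  finally show ?thesis .
qed

end

locale model =
  fixes Hl :: "'l::chilbert \<Rightarrow> 'l" and Dl :: "'l set"
    and Hr :: "'r::chilbert \<Rightarrow> 'r" and Dr :: "'r set"
    and HS :: "'s::chilbert \<Rightarrow> 's"
    and chil :: 'l and chir :: 'r and dell :: 's and delr :: 's
  assumes sa_l: "self_adjoint_op Dl Hl"
    and sa_S: "self_adjoint_op UNIV HS"
    and sa_r: "self_adjoint_op Dr Hr"
begin

sublocale L: sa Dl Hl by (rule sa.intro[OF sa_l])
sublocale S: sa UNIV HS by (rule sa.intro[OF sa_S])
sublocale R: sa Dr Hr by (rule sa.intro[OF sa_r])

lemma saN: "sa (dom0 Dl Dr) (Hpert Hl HS Hr chil chir dell delr 0 nu :: 'l \<times> 's \<times> 'r \<Rightarrow> _)"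
  by (rule sa.intro[OF sa_Hpert[OF sa_l sa_S sa_r]])

lemma G_XL: assumes z: "Im z \<noteq> 0"
  shows "green (dom0 Dl Dr) (Hpert Hl HS Hr chil chir dell delr 0 nu) (chil, 0::'s, 0::'r) (chil, 0, 0) z
         = green Dl Hl chil chil z"
proof -
  interpret N: sa "dom0 Dl Dr" "Hpert Hl HS Hr chil chir dell delr 0 nu :: 'l \<times> 's \<times> 'r \<Rightarrow> _" by (rule saN)
  define w where "w = resolvent Dl Hl z chil"
  have w: "w \<in> Dl" "Hl w - cscale z w = chil" using L.resolvent_props[OF z] by (auto simp: w_def)
  have "resolvent (dom0 Dl Dr) (Hpert Hl HS Hr chil chir dell delr 0 nu) z (chil, 0::'s, 0::'r) = (w, 0, 0)"
    by (rule N.resolvent_eq[OF z]) (use w R.D0 in \<open>auto simp: dom0_def Hpert0 S.A0 R.A0 zero_prod_def\<close>)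
  thus ?thesis by (simp add: green_def w_def)
qed

lemma G_XR0: assumes z: "Im z \<noteq> 0"
  shows "green (dom0 Dl Dr) (Hpert Hl HS Hr chil chir dell delr 0 0) (0::'l, 0::'s, chir) (0, 0, chir) z
         = green Dr Hr chir chir z"
proof -
  interpret N: sa "dom0 Dl Dr" "Hpert Hl HS Hr chil chir dell delr 0 0 :: 'l \<times> 's \<times> 'r \<Rightarrow> _" by (rule saN)
  define w where "w = resolvent Dr Hr z chir"
  have w: "w \<in> Dr" "Hr w - cscale z w = chir" using R.resolvent_props[OF z] by (auto simp: w_def)
  have "resolvent (dom0 Dl Dr) (Hpert Hl HS Hr chil chir dell delr 0 0) z (0::'l, 0::'s, chir) = (0, 0, w)"
    by (rule N.resolvent_eq[OF z]) (use w L.D0 in \<open>auto simp: dom0_def Hpert0 S.A0 L.A0 zero_prod_def\<close>)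
  thus ?thesis by (simp add: green_def w_def)
qed

lemma G_DL: assumes z: "Im z \<noteq> 0"
  shows "\<exists>\<alpha> \<beta>. \<alpha> = - of_real nu * \<beta> * green Dr Hr chir chir z \<and>
     \<beta> = green UNIV HS delr dell z - of_real nu * \<alpha> * green UNIV HS delr delr z \<and>
     green (dom0 Dl Dr) (Hpert Hl HS Hr chil chir dell delr 0 nu) (0::'l, dell, 0::'r) (0, dell, 0) z
       = green UNIV HS dell dell z - of_real nu * \<alpha> * green UNIV HS dell delr z"
proof -
  interpret N: sa "dom0 Dl Dr" "Hpert Hl HS Hr chil chir dell delr 0 nu :: 'l \<times> 's \<times> 'r \<Rightarrow> _" by (rule saN)
  define u where "u = resolvent (dom0 Dl Dr) (Hpert Hl HS Hr chil chir dell delr 0 nu) z (0::'l, dell, 0::'r)"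
  obtain u1 u2 u3 where u123: "u = (u1, u2, u3)" by (cases u) auto
  have uD: "u \<in> dom0 Dl Dr"
    and ue: "Hpert Hl HS Hr chil chir dell delr 0 nu u - cscale z u = (0, dell, 0)"
    using N.resolvent_props[OF z] by (auto simp: u_def)
  define \<alpha> where "\<alpha> = cinner chir u3"
  define \<beta> where "\<beta> = cinner delr u2"
  have u3D: "u3 \<in> Dr" using uD by (simp add: u123 dom0_def)
  have e2: "HS u2 - cscale z u2 = dell - cscale (of_real nu * \<alpha>) delr"
    using ue by (simp add: u123 Hpert0 \<alpha>_def algebra_simps)
  have e3: "Hr u3 - cscale z u3 = - cscale (of_real nu * \<beta>) chir"
    using ue by (simp add: u123 Hpert0 \<beta>_def algebra_simps eq_neg_iff_add_eq_0)
  define a where "a = resolvent UNIV HS z dell"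
  define b where "b = resolvent UNIV HS z delr"
  define f where "f = resolvent Dr Hr z chir"
  have a: "HS a - cscale z a = dell" using S.resolvent_props[OF z] by (simp add: a_def)
  have b: "HS b - cscale z b = delr" using S.resolvent_props[OF z] by (simp add: b_def)
  have f: "f \<in> Dr" "Hr f - cscale z f = chir" using R.resolvent_props[OF z] by (auto simp: f_def)
  have u2eq: "u2 = a - cscale (of_real nu * \<alpha>) b"
  proof (rule S.unique[OF z])
    show "HS u2 - cscale z u2 = HS (a - cscale (of_real nu * \<alpha>) b) - cscale z (a - cscale (of_real nu * \<alpha>) b)"
      unfolding e2
      by (simp add: S.Adiff S.Ascale cscale_diff_right cscale_mult mult.commute
          flip: a b)
  qed auto
  have u3eq: "u3 = - cscale (of_real nu * \<beta>) f"
  proof (rule R.unique[OF z u3D])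
    show "- cscale (of_real nu * \<beta>) f \<in> Dr" using f(1) by (simp add: R.Dscale flip: cscale_minus_left)
    show "Hr u3 - cscale z u3 = Hr (- cscale (of_real nu * \<beta>) f) - cscale z (- cscale (of_real nu * \<beta>) f)"
    proof -
      define c where "c = - (of_real nu * \<beta>)"
      have "Hr (cscale c f) - cscale z (cscale c f) = cscale c (Hr f) - cscale c (cscale z f)"
        using f(1) by (simp add: R.Ascale cscale_mult mult.commute)
      also have "\<dots> = cscale c chir" using f(2) by (simp flip: cscale_diff_right)
      finally show ?thesis unfolding e3 c_def by (simp add: cscale_minus_left)
    qed
  qed
  have "\<alpha> = - of_real nu * \<beta> * green Dr Hr chir chir z"
    by (simp add: \<alpha>_def u3eq green_def f_def cinner_minus_right cinner_cscale_right)
  moreover have "\<beta> = green UNIV HS delr dell z - of_real nu * \<alpha> * green UNIV HS delr delr z"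
    by (simp add: \<beta>_def u2eq green_def a_def b_def cinner_diff_right cinner_cscale_right)
  moreover have "green (dom0 Dl Dr) (Hpert Hl HS Hr chil chir dell delr 0 nu) (0::'l, dell, 0::'r) (0, dell, 0) z
       = green UNIV HS dell dell z - of_real nu * \<alpha> * green UNIV HS dell delr z"
    by (simp add: green_def u_def[symmetric] u123 u2eq a_def b_def cinner_diff_right cinner_cscale_right)
  ultimately show ?thesis by blast
qed

end



lemma fd_bounded:
  fixes f :: "'a::chilbert \<Rightarrow> 'b::real_normed_vector"
  assumes fin: "finite_dim TYPE('a)" and lin: "linear f"
  shows "\<exists>K\<ge>0. \<forall>x. norm (f x) \<le> K * norm x"
proof -
  obtain B :: "'a set" where fB: "finite B" and sB: "span B = UNIV"
    using fin unfolding finite_dim_def by blast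
  obtain C where fC: "finite C" and sC: "span C = span B" and po: "pairwise orthogonal C"
    using basis_orthogonal[OF fB] by blast
  define C' where "C' = C - {0}"
  have fC': "finite C'" using fC by (simp add: C'_def)
  define k where "k x c = inner x c / inner c c" for x c :: 'a
  have rep: "x = (\<Sum>c\<in>C'. k x c *\<^sub>R c)" for x
  proof -
    define r where "r = x - (\<Sum>c\<in>C'. k x c *\<^sub>R c)"
    have rc: "inner r c = 0" if cC: "c \<in> C" for c
    proof (cases "c = 0")
      case True thus ?thesis by simp
    next
      case False
      hence cC': "c \<in> C'" using cC by (simp add: C'_def)
      have "inner (\<Sum>c'\<in>C'. k x c' *\<^sub>R c') c = (\<Sum>c'\<in>C'. k x c' * inner c' c)"
        by (simp add: inner_sum_left)
      also have "\<dots> = k x c * inner c c + (\<Sum>c'\<in>C' - {c}. k x c' * inner c' c)"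
        using fC' cC' by (simp add: sum.remove)
      also have "(\<Sum>c'\<in>C' - {c}. k x c' * inner c' c) = 0"
      proof (rule sum.neutral, intro ballI)
        fix c' assume "c' \<in> C' - {c}"
        hence "c' \<in> C" "c' \<noteq> c" by (auto simp: C'_def)
        hence "inner c' c = 0" using po cC unfolding pairwise_def orthogonal_def by blast
        thus "k x c' * inner c' c = 0" by simp
      qed
      also have "k x c * inner c c = inner x c" using False by (simp add: k_def)
      finally show ?thesis by (simp add: r_def inner_diff_left)
    qed
    have "inner r y = 0" if "y \<in> span C" for y
      using that
    proof (induct rule: span_induct)
      show "subspace {y. inner r y = 0}"
        by (auto simp: subspace_def inner_add_right)
    qed (rule rc)
    hence "inner r r = 0" using sC sB by simp
    hence "r = 0" by simp
    thus ?thesis by (simp add: r_def)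
  qed
  define K where "K = (\<Sum>c\<in>C'. norm c / inner c c * norm (f c))"
  have K0: "0 \<le> K" unfolding K_def by (intro sum_nonneg) simp
  have "norm (f x) \<le> K * norm x" for x
  proof -
    have "f x = (\<Sum>c\<in>C'. k x c *\<^sub>R f c)"
      by (subst rep[of x]) (simp add: linear_sum[OF lin] linear_scale[OF lin])
    hence "norm (f x) \<le> (\<Sum>c\<in>C'. norm (k x c *\<^sub>R f c))"
      by (simp only:) (rule norm_sum)
    also have "\<dots> \<le> (\<Sum>c\<in>C'. norm x * (norm c / inner c c * norm (f c)))"
    proof (rule sum_mono)
      fix c assume "c \<in> C'"
      have "\<bar>k x c\<bar> \<le> norm x * norm c / inner c c"
        unfolding k_def using Cauchy_Schwarz_ineq2[of x c]
        by (simp add: abs_div_pos divide_right_mono)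
      from mult_right_mono[OF this norm_ge_zero[of "f c"]]
      have "\<bar>k x c\<bar> * norm (f c) \<le> norm x * norm c / inner c c * norm (f c)" .
      also have "\<dots> = norm x * (norm c / inner c c * norm (f c))" by simp
      finally show "norm (k x c *\<^sub>R f c) \<le> norm x * (norm c / inner c c * norm (f c))"
        by simp
    qed
    also have "\<dots> = K * norm x" by (simp add: K_def sum_distrib_left mult.commute)
    finally show ?thesis .
  qed
  with K0 show ?thesis by blast
qed

context model begin

lemma HS_ex1_real: "E \<notin> real_spectrum UNIV HS \<Longrightarrow> \<exists>!u. u \<in> UNIV \<and> HS u - cscale (of_real E) u = \<psi>"
  unfolding real_spectrum_def op_spectrum_def by auto

lemma HS_lower:
  assumes fin: "finite_dim TYPE('s)" and E: "E \<notin> real_spectrum UNIV HS"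
  shows "\<exists>K>0. \<forall>u. norm u \<le> K * norm (HS u - E *\<^sub>R u)"
proof -
  define g where "g = resolvent UNIV HS (of_real E)"
  have g: "HS (g \<psi>) - E *\<^sub>R g \<psi> = \<psi>" for \<psi>
    using theI'[OF HS_ex1_real[OF E, of \<psi>]] by (simp add: g_def resolvent_def)
  have gu: "g \<psi> = u" if "HS u - E *\<^sub>R u = \<psi>" for u \<psi>
    unfolding g_def resolvent_def using that
    by (intro the1_equality[OF HS_ex1_real[OF E]]) auto
  have lin: "linear g"
  proof (rule linearI)
    fix x y show "g (x + y) = g x + g y"
    proof (rule gu)
      have "HS (g x + g y) - E *\<^sub>R (g x + g y) = (HS (g x) - E *\<^sub>R g x) + (HS (g y) - E *\<^sub>R g y)"
        by (simp add: S.Aadd algebra_simps)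
      also have "\<dots> = x + y" by (simp only: g)
      finally show "HS (g x + g y) - E *\<^sub>R (g x + g y) = x + y" .
    qed
  next
    fix r :: real and x show "g (r *\<^sub>R x) = r *\<^sub>R g x"
    proof (rule gu)
      have "HS (r *\<^sub>R g x) = r *\<^sub>R HS (g x)" using S.Ascale[of "g x" "of_real r"] by simp
      thus "HS (r *\<^sub>R g x) - E *\<^sub>R r *\<^sub>R g x = r *\<^sub>R x"
        using g[of x] by (simp add: algebra_simps flip: scaleR_diff_right)
    qed
  qed
  obtain K where K0: "K \<ge> 0" and K: "\<And>x. norm (g x) \<le> K * norm x"
    using fd_bounded[OF fin lin] by blast
  have "norm u \<le> (K + 1) * norm (HS u - E *\<^sub>R u)" for u
  proof -
    have "g (HS u - E *\<^sub>R u) = u" by (rule gu) simp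
    hence "norm u \<le> K * norm (HS u - E *\<^sub>R u)" using K by metis
    also have "\<dots> \<le> (K + 1) * norm (HS u - E *\<^sub>R u)" by (simp add: mult_right_mono)
    finally show ?thesis .
  qed
  thus ?thesis using K0 by (intro exI[of _ "K+1"]) auto
qed

lemma GS_cont:
  assumes fin: "finite_dim TYPE('s)" and E: "E \<notin> real_spectrum UNIV HS"
  shows "((\<lambda>\<epsilon>. green UNIV HS \<phi> \<psi> (Complex E \<epsilon>)) \<longlongrightarrow> green UNIV HS \<phi> \<psi> (of_real E)) (at_right 0)"
proof -
  obtain K where K0: "K > 0" and K: "\<And>u. norm u \<le> K * norm (HS u - E *\<^sub>R u)"
    using HS_lower[OF fin E] by blast
  define a where "a = resolvent UNIV HS (of_real E) \<psi>"
  have a: "HS a - E *\<^sub>R a = \<psi>"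
    using theI'[OF HS_ex1_real[OF E, of \<psi>]] by (simp add: a_def resolvent_def)
  have bound: "cmod (green UNIV HS \<phi> \<psi> (Complex E \<epsilon>) - green UNIV HS \<phi> \<psi> (of_real E))
      \<le> 4 * K * norm \<phi> * norm a * \<epsilon>" if e0: "0 < \<epsilon>" and e1: "\<epsilon> < 1 / (2 * K)" for \<epsilon>
  proof -
    define z where "z = Complex E \<epsilon>"
    have zi: "Im z \<noteq> 0" using e0 by (simp add: z_def)
    define b where "b = resolvent UNIV HS z \<psi>"
    have b: "HS b - cscale z b = \<psi>" using S.resolvent_props[OF zi] by (simp add: b_def)
    define w where "w = a - b"
    have zE: "z = of_real E + \<i> * of_real \<epsilon>" by (simp add: z_def complex_eq_iff)
    have cz: "cscale z v = E *\<^sub>R v + cscale (\<i> * of_real \<epsilon>) v" for v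
      by (simp add: zE cscale_add_left)
    have nc: "norm (cscale (\<i> * of_real \<epsilon>) v) = \<epsilon> * norm v" for v
      using e0 by (simp add: norm_cscale norm_mult)
    have hw: "HS w - E *\<^sub>R w = - cscale (\<i> * of_real \<epsilon>) b"
    proof -
      have "HS w - E *\<^sub>R w = (HS a - E *\<^sub>R a) - (HS b - E *\<^sub>R b)"
        unfolding w_def by (simp add: S.Adiff algebra_simps)
      also have "HS b - E *\<^sub>R b = \<psi> + cscale (\<i> * of_real \<epsilon>) b"
        using b unfolding cz by (simp add: algebra_simps)
      finally show ?thesis using a by simp
    qed
    have "HS w - E *\<^sub>R w = cscale (\<i> * of_real \<epsilon>) w - cscale (\<i> * of_real \<epsilon>) a"
      unfolding hw by (simp add: w_def cscale_diff_right)
    hence "norm (HS w - E *\<^sub>R w) \<le> \<epsilon> * norm w + \<epsilon> * norm a"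
      using norm_triangle_ineq4[of "cscale (\<i> * of_real \<epsilon>) w" "cscale (\<i> * of_real \<epsilon>) a"]
      by (simp only: nc)
    hence "K * norm (HS w - E *\<^sub>R w) \<le> K * (\<epsilon> * norm a + \<epsilon> * norm w)"
      using K0 by (simp add: mult_left_mono add.commute)
    hence "norm w \<le> K * (\<epsilon> * norm a + \<epsilon> * norm w)"
      using K[of w] by linarith
    hence "norm w * (1 - K * \<epsilon>) \<le> K * \<epsilon> * norm a" by (simp add: algebra_simps)
    moreover have "1/2 \<le> 1 - K * \<epsilon>" using e1 K0 by (simp add: field_simps)
    ultimately have "norm w * (1/2) \<le> K * \<epsilon> * norm a"
      by (meson mult_left_mono norm_ge_zero order_trans)
    hence nw: "norm w \<le> 2 * K * \<epsilon> * norm a" by simp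
    have "green UNIV HS \<phi> \<psi> (Complex E \<epsilon>) - green UNIV HS \<phi> \<psi> (of_real E) = - cinner \<phi> w"
      by (simp add: green_def a_def b_def z_def w_def cinner_diff_right)
    hence "cmod (green UNIV HS \<phi> \<psi> (Complex E \<epsilon>) - green UNIV HS \<phi> \<psi> (of_real E)) \<le> 2 * (norm \<phi> * norm w)"
      using cmod_cinner[of \<phi> w] by simp
    also have "\<dots> \<le> 2 * (norm \<phi> * (2 * K * \<epsilon> * norm a))"
      by (rule mult_left_mono[OF mult_left_mono[OF nw norm_ge_zero]]) simp
    finally show ?thesis by (simp add: algebra_simps)
  qed
  have "((\<lambda>\<epsilon>. green UNIV HS \<phi> \<psi> (Complex E \<epsilon>) - green UNIV HS \<phi> \<psi> (of_real E)) \<longlongrightarrow> 0) (at_right 0)"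
  proof (rule Lim_null_comparison)
    show "\<forall>\<^sub>F \<epsilon> in at_right 0. norm (green UNIV HS \<phi> \<psi> (Complex E \<epsilon>) - green UNIV HS \<phi> \<psi> (of_real E))
         \<le> 4 * K * norm \<phi> * norm a * \<epsilon>"
      unfolding eventually_at_right_field
      using K0 by (intro exI[of _ "1 / (2 * K)"]) (auto intro!: bound)
    have "((\<lambda>\<epsilon>::real. 4 * K * norm \<phi> * norm a * \<epsilon>) \<longlongrightarrow> 4 * K * norm \<phi> * norm a * 0) (at_right 0)"
      by (intro tendsto_intros)
    thus "((\<lambda>\<epsilon>::real. 4 * K * norm \<phi> * norm a * \<epsilon>) \<longlongrightarrow> 0) (at_right 0)" by simp
  qed
  thus ?thesis by (rule LIM_zero_cancel)
qed

end



lemma core2: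
  fixes \<gamma> F a b dd :: "real \<Rightarrow> complex" and q a0 b0 d0 :: complex
  assumes ev: "eventually (\<lambda>\<epsilon>. \<gamma> \<epsilon> * (1 - q * b \<epsilon> * F \<epsilon>) = a \<epsilon> - q * F \<epsilon> * dd \<epsilon> \<and> 1 - q * b \<epsilon> * F \<epsilon> \<noteq> 0) (at_right 0)"
    and la: "(a \<longlongrightarrow> a0) (at_right 0)" and lb: "(b \<longlongrightarrow> b0) (at_right 0)"
    and ld: "(dd \<longlongrightarrow> d0) (at_right 0)"
    and q: "q \<noteq> 0" and d0: "d0 \<noteq> 0" and ab: "d0 - a0 * b0 \<noteq> 0"
  shows "(\<gamma> \<longlongrightarrow> 0) (at_right 0) \<longleftrightarrow> (F \<longlongrightarrow> a0 / (q * d0)) (at_right 0)"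
proof
  assume g: "(\<gamma> \<longlongrightarrow> 0) (at_right 0)"
  have l1: "((\<lambda>\<epsilon>. dd \<epsilon> - b \<epsilon> * \<gamma> \<epsilon>) \<longlongrightarrow> d0 - b0 * 0) (at_right 0)"
    by (intro tendsto_intros ld lb g)
  have ev2: "eventually (\<lambda>\<epsilon>. dd \<epsilon> - b \<epsilon> * \<gamma> \<epsilon> \<noteq> 0) (at_right 0)"
    by (rule tendsto_imp_eventually_ne[OF l1]) (use d0 in simp)
  have ev3: "eventually (\<lambda>\<epsilon>. (a \<epsilon> - \<gamma> \<epsilon>) / (q * (dd \<epsilon> - b \<epsilon> * \<gamma> \<epsilon>)) = F \<epsilon>) (at_right 0)"
    using ev ev2
  proof eventually_elim
    case (elim \<epsilon>)
    hence "F \<epsilon> * (q * (dd \<epsilon> - b \<epsilon> * \<gamma> \<epsilon>)) = a \<epsilon> - \<gamma> \<epsilon>"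
      by (auto simp: algebra_simps)
    thus ?case using elim q by (simp add: divide_eq_eq)
  qed
  have "((\<lambda>\<epsilon>. (a \<epsilon> - \<gamma> \<epsilon>) / (q * (dd \<epsilon> - b \<epsilon> * \<gamma> \<epsilon>))) \<longlongrightarrow> (a0 - 0) / (q * (d0 - b0 * 0))) (at_right 0)"
    using q d0 by (intro tendsto_intros la g ld lb) auto
  hence "((\<lambda>\<epsilon>. (a \<epsilon> - \<gamma> \<epsilon>) / (q * (dd \<epsilon> - b \<epsilon> * \<gamma> \<epsilon>))) \<longlongrightarrow> a0 / (q * d0)) (at_right 0)" by simp
  thus "(F \<longlongrightarrow> a0 / (q * d0)) (at_right 0)" using tendsto_cong[OF ev3] by simp
next
  assume f: "(F \<longlongrightarrow> a0 / (q * d0)) (at_right 0)"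
  have evg: "eventually (\<lambda>\<epsilon>. (a \<epsilon> - q * F \<epsilon> * dd \<epsilon>) / (1 - q * b \<epsilon> * F \<epsilon>) = \<gamma> \<epsilon>) (at_right 0)"
    using ev by eventually_elim (simp add: divide_eq_eq)
  have num: "a0 - q * (a0 / (q * d0)) * d0 = 0" using q d0 by simp
  have den: "1 - q * b0 * (a0 / (q * d0)) \<noteq> 0"
  proof
    assume "1 - q * b0 * (a0 / (q * d0)) = 0"
    hence "d0 - a0 * b0 = 0" using q d0 by (simp add: field_simps)
    with ab show False by simp
  qed
  have "((\<lambda>\<epsilon>. (a \<epsilon> - q * F \<epsilon> * dd \<epsilon>) / (1 - q * b \<epsilon> * F \<epsilon>)) \<longlongrightarrow>
      (a0 - q * (a0 / (q * d0)) * d0) / (1 - q * b0 * (a0 / (q * d0)))) (at_right 0)"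
    using den by (intro tendsto_intros la f ld lb) auto
  hence "((\<lambda>\<epsilon>. (a \<epsilon> - q * F \<epsilon> * dd \<epsilon>) / (1 - q * b \<epsilon> * F \<epsilon>)) \<longlongrightarrow> 0) (at_right 0)"
    by (simp only: num) simp
  thus "(\<gamma> \<longlongrightarrow> 0) (at_right 0)" using tendsto_cong[OF evg] by simp
qed

lemma core3:
  fixes \<gamma> F a b dd :: "real \<Rightarrow> complex" and q a0 b0 d0 :: complex
  assumes ev: "eventually (\<lambda>\<epsilon>. \<gamma> \<epsilon> * (1 - q * b \<epsilon> * F \<epsilon>) = a \<epsilon> - q * F \<epsilon> * dd \<epsilon> \<and> 1 - q * b \<epsilon> * F \<epsilon> \<noteq> 0) (at_right 0)"
    and la: "(a \<longlongrightarrow> a0) (at_right 0)" and lb: "(b \<longlongrightarrow> b0) (at_right 0)"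
    and ld: "(dd \<longlongrightarrow> d0) (at_right 0)"
    and q: "q \<noteq> 0" and b0: "b0 \<noteq> 0" and ab: "d0 - a0 * b0 \<noteq> 0"
  shows "filterlim (\<lambda>\<epsilon>. cmod (\<gamma> \<epsilon>)) at_top (at_right 0) \<longleftrightarrow> (F \<longlongrightarrow> 1 / (q * b0)) (at_right 0)"
proof
  assume h: "filterlim (\<lambda>\<epsilon>. cmod (\<gamma> \<epsilon>)) at_top (at_right 0)"
  have i1: "((\<lambda>\<epsilon>. inverse (cmod (\<gamma> \<epsilon>))) \<longlongrightarrow> 0) (at_right 0)"
    by (rule tendsto_inverse_0_at_top[OF h])
  have ig: "((\<lambda>\<epsilon>. inverse (\<gamma> \<epsilon>)) \<longlongrightarrow> 0) (at_right 0)"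
    by (rule tendsto_norm_zero_cancel) (use i1 in \<open>simp add: norm_inverse\<close>)
  have evnz: "eventually (\<lambda>\<epsilon>. \<gamma> \<epsilon> \<noteq> 0) (at_right 0)"
  proof -
    have "eventually (\<lambda>\<epsilon>. 1 \<le> cmod (\<gamma> \<epsilon>)) (at_right 0)"
      using h unfolding filterlim_at_top by blast
    thus ?thesis by eventually_elim auto
  qed
  have l1: "((\<lambda>\<epsilon>. dd \<epsilon> * inverse (\<gamma> \<epsilon>) - b \<epsilon>) \<longlongrightarrow> d0 * 0 - b0) (at_right 0)"
    by (intro tendsto_intros ld lb ig)
  have ev2: "eventually (\<lambda>\<epsilon>. dd \<epsilon> * inverse (\<gamma> \<epsilon>) - b \<epsilon> \<noteq> 0) (at_right 0)"
    by (rule tendsto_imp_eventually_ne[OF l1]) (use b0 in simp)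
  have ev3: "eventually (\<lambda>\<epsilon>. (a \<epsilon> * inverse (\<gamma> \<epsilon>) - 1) / (q * (dd \<epsilon> * inverse (\<gamma> \<epsilon>) - b \<epsilon>)) = F \<epsilon>) (at_right 0)"
    using ev ev2 evnz
  proof eventually_elim
    case (elim \<epsilon>)
    hence e1: "F \<epsilon> * (q * (dd \<epsilon> - b \<epsilon> * \<gamma> \<epsilon>)) = a \<epsilon> - \<gamma> \<epsilon>"
      by (auto simp: algebra_simps)
    have "F \<epsilon> * (q * (dd \<epsilon> * inverse (\<gamma> \<epsilon>) - b \<epsilon>)) = (F \<epsilon> * (q * (dd \<epsilon> - b \<epsilon> * \<gamma> \<epsilon>))) * inverse (\<gamma> \<epsilon>)"
      using elim by (simp add: field_simps)
    also have "\<dots> = a \<epsilon> * inverse (\<gamma> \<epsilon>) - 1" using e1 elim by (simp add: field_simps)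
    finally show ?case using elim q by (simp add: divide_eq_eq)
  qed
  have "((\<lambda>\<epsilon>. (a \<epsilon> * inverse (\<gamma> \<epsilon>) - 1) / (q * (dd \<epsilon> * inverse (\<gamma> \<epsilon>) - b \<epsilon>)))
      \<longlongrightarrow> (a0 * 0 - 1) / (q * (d0 * 0 - b0))) (at_right 0)"
    using q b0 by (intro tendsto_intros la ig ld lb) auto
  hence "((\<lambda>\<epsilon>. (a \<epsilon> * inverse (\<gamma> \<epsilon>) - 1) / (q * (dd \<epsilon> * inverse (\<gamma> \<epsilon>) - b \<epsilon>)))
      \<longlongrightarrow> 1 / (q * b0)) (at_right 0)" by simp
  thus "(F \<longlongrightarrow> 1 / (q * b0)) (at_right 0)" using tendsto_cong[OF ev3] by simp
next
  assume f: "(F \<longlongrightarrow> 1 / (q * b0)) (at_right 0)"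
  have evg: "eventually (\<lambda>\<epsilon>. cmod (a \<epsilon> - q * F \<epsilon> * dd \<epsilon>) / cmod (1 - q * b \<epsilon> * F \<epsilon>) = cmod (\<gamma> \<epsilon>)) (at_right 0)"
    using ev by eventually_elim (simp add: divide_eq_eq norm_mult[symmetric])
  have num: "((\<lambda>\<epsilon>. cmod (a \<epsilon> - q * F \<epsilon> * dd \<epsilon>)) \<longlongrightarrow> cmod (a0 - q * (1 / (q * b0)) * d0)) (at_right 0)"
    by (intro tendsto_intros la f ld)
  have num0: "0 < cmod (a0 - q * (1 / (q * b0)) * d0)"
  proof -
    have "a0 - q * (1 / (q * b0)) * d0 \<noteq> 0"
    proof
      assume "a0 - q * (1 / (q * b0)) * d0 = 0"
      hence "d0 - a0 * b0 = 0" using q b0 by (simp add: field_simps)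
      with ab show False by simp
    qed
    thus ?thesis by simp
  qed
  have "((\<lambda>\<epsilon>. 1 - q * b \<epsilon> * F \<epsilon>) \<longlongrightarrow> 1 - q * b0 * (1 / (q * b0))) (at_right 0)"
    by (intro tendsto_intros lb f)
  hence "((\<lambda>\<epsilon>. 1 - q * b \<epsilon> * F \<epsilon>) \<longlongrightarrow> 0) (at_right 0)" using q b0 by simp
  hence den: "((\<lambda>\<epsilon>. cmod (1 - q * b \<epsilon> * F \<epsilon>)) \<longlongrightarrow> 0) (at_right 0)"
    by (simp add: tendsto_norm_zero_iff)
  have denpos: "eventually (\<lambda>\<epsilon>. 0 < cmod (1 - q * b \<epsilon> * F \<epsilon>)) (at_right 0)"
    using ev by eventually_elim simp
  have "filterlim (\<lambda>\<epsilon>. cmod (a \<epsilon> - q * F \<epsilon> * dd \<epsilon>) / cmod (1 - q * b \<epsilon> * F \<epsilon>)) at_top (at_right 0)"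
    by (rule LIM_at_top_divide[OF num num0 den denpos])
  thus "filterlim (\<lambda>\<epsilon>. cmod (\<gamma> \<epsilon>)) at_top (at_right 0)"
    using filterlim_cong[OF refl refl evg] by simp
qed



lemma D_ne:
  fixes s f :: complex
  assumes s: "0 < Im s" and f: "0 < Im f" and r: "0 \<le> r"
  shows "1 - of_real r * s * f \<noteq> 0"
proof
  assume eq: "1 - of_real r * s * f = 0"
  hence rsf: "of_real r * (s * f) = 1" by (simp add: algebra_simps)
  hence "r \<noteq> 0" by auto
  with r have r0: "0 < r" by simp
  from rsf have "Im (of_real r * (s * f)) = 0" by simp
  hence "r * (Re s * Im f + Im s * Re f) = 0" by (simp add: algebra_simps)
  hence "Re s * Im f + Im s * Re f = 0" using r0 by simp
  hence h1: "Re s * Im f = - Im s * Re f" by (simp add: eq_neg_iff_add_eq_0)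
  from rsf have "Re (of_real r * (s * f)) = 1" by simp
  hence "r * (Re s * Re f - Im s * Im f) = 1" by simp
  hence h2: "0 < Re s * Re f - Im s * Im f" using r0
    by (metis less_numeral_extra(1) zero_less_mult_pos)
  have "0 < (Re s * Re f - Im s * Im f) * Im f" using h2 f by simp
  also have "(Re s * Re f - Im s * Im f) * Im f = (Re s * Im f) * Re f - Im s * (Im f * Im f)"
    by (simp add: algebra_simps)
  also have "\<dots> = - Im s * Re f * Re f - Im s * (Im f * Im f)" by (simp only: h1)
  also have "\<dots> = - Im s * (Re f * Re f + Im f * Im f)" by (simp add: algebra_simps)
  finally have "0 < - Im s * (Re f * Re f + Im f * Im f)" .
  moreover have "0 \<le> Im s * (Re f * Re f + Im f * Im f)" using s by simp
  ultimately show False by simp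
qed

lemma tendsto_at_top_absurd:
  fixes f :: "real \<Rightarrow> real"
  assumes "filterlim f at_top (at_right 0)" "(f \<longlongrightarrow> l) (at_right 0)"
  shows False
proof -
  have "eventually (\<lambda>x. l + 1 \<le> f x) (at_right (0::real))" using assms(1) unfolding filterlim_at_top by blast
  moreover have "eventually (\<lambda>x. f x < l + 1) (at_right (0::real))"
    using order_tendstoD(2)[OF assms(2), of "l+1"] by simp
  ultimately have "eventually (\<lambda>x. False) (at_right (0::real))" by eventually_elim simp
  thus False by simp
qed

context model begin

lemma DL_identity:
  assumes z: "0 < Im z" and chir: "chir \<noteq> 0" and delr: "delr \<noteq> 0"
  shows "green (dom0 Dl Dr) (Hpert Hl HS Hr chil chir dell delr 0 nu) (0::'l, dell, 0::'r) (0, dell, 0) z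
          * (1 - of_real (nu^2) * green UNIV HS delr delr z * green Dr Hr chir chir z)
        = green UNIV HS dell dell z - of_real (nu^2) * green Dr Hr chir chir z *
          (green UNIV HS dell dell z * green UNIV HS delr delr z - green UNIV HS dell delr z * green UNIV HS delr dell z)
      \<and> 1 - of_real (nu^2) * green UNIV HS delr delr z * green Dr Hr chir chir z \<noteq> 0"
proof -
  have zi: "Im z \<noteq> 0" using z by simp
  obtain \<alpha> \<beta> where al: "\<alpha> = - of_real nu * \<beta> * green Dr Hr chir chir z"
    and be: "\<beta> = green UNIV HS delr dell z - of_real nu * \<alpha> * green UNIV HS delr delr z"
    and ga: "green (dom0 Dl Dr) (Hpert Hl HS Hr chil chir dell delr 0 nu) (0::'l, dell, 0::'r) (0, dell, 0) z
       = green UNIV HS dell dell z - of_real nu * \<alpha> * green UNIV HS dell delr z"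
    using G_DL[OF zi, of nu] by blast
  have dne: "1 - of_real (nu^2) * green UNIV HS delr delr z * green Dr Hr chir chir z \<noteq> 0"
    by (rule D_ne[OF S.herglotz[OF z delr] R.herglotz[OF z chir]]) simp
  show ?thesis
    using dne unfolding ga
    by (simp add: al) (use be al in algebra)
qed

end

theorem lemma2p3:
  fixes Hl :: "'l::chilbert \<Rightarrow> 'l" and Dl :: "'l set"
    and Hr :: "'r::chilbert \<Rightarrow> 'r" and Dr :: "'r set"
    and HS :: "'s::chilbert \<Rightarrow> 's"
    and chil :: 'l and chir :: 'r and dell :: 's and delr :: 's
  defines "G \<equiv> (\<lambda>nu::real. green (dom0 Dl Dr) (Hpert Hl HS Hr chil chir dell delr 0 nu))"
    and "GS \<equiv> (\<lambda>\<phi> \<psi> (E::real). green UNIV HS \<phi> \<psi> (complex_of_real E))"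
    and "N \<equiv> Nset HS dell delr"
    and "C \<equiv> (\<lambda>nu::real. Cset (Hpert Hl HS Hr chil chir dell delr 0 nu) (dom0 Dl Dr))"
    and "XL \<equiv> (emb_l chil :: 'l \<times> 's \<times> 'r)"
    and "XR \<equiv> (emb_r chir :: 'l \<times> 's \<times> 'r)"
    and "DL \<equiv> (emb_S dell :: 'l \<times> 's \<times> 'r)"
    and "DR \<equiv> (emb_S delr :: 'l \<times> 's \<times> 'r)"
  assumes fin: "finite_dim TYPE('s)"
    and sa_l: "self_adjoint_op Dl Hl"
    and sa_S: "self_adjoint_op UNIV HS"
    and sa_r: "self_adjoint_op Dr Hr"
    and nz: "chil \<noteq> 0" "chir \<noteq> 0" "dell \<noteq> 0" "delr \<noteq> 0"
    and nontriv: "\<exists>E. E \<notin> real_spectrum UNIV HS \<and> GS dell delr E \<noteq> 0"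
    and cyc: "cyclic_family (dom0 Dl Dr) (H0 Hl HS Hr) {XL, XR, DL, DR}"
  shows "(C 0 XL DL \<subseteq> N \<and> C 0 DL XL \<subseteq> N) \<and>
         (\<forall>nu. nu \<noteq> 0 \<longrightarrow> C nu XL DL - N =
           {E. E \<notin> N \<and>
               filterlim (\<lambda>\<epsilon>. cmod (G 0 XL XL (Complex E \<epsilon>))) at_top (at_right 0) \<and>
               ((\<lambda>\<epsilon>. G 0 XR XR (Complex E \<epsilon>)) \<longlongrightarrow>
                  GS dell dell E / (complex_of_real (nu^2) * dfun HS dell delr E)) (at_right 0)}) \<and>
         (\<forall>nu. nu \<noteq> 0 \<longrightarrow> C nu DL XL - N =
           {E. E \<notin> N \<and>
               ((\<lambda>\<epsilon>. cmod (G 0 XL XL (Complex E \<epsilon>))) \<longlongrightarrow> 0) (at_right 0) \<and>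
               ((\<lambda>\<epsilon>. G 0 XR XR (Complex E \<epsilon>)) \<longlongrightarrow>
                  1 / (complex_of_real (nu^2) * GS delr delr E)) (at_right 0)})"


proof -
  interpret M: model Hl Dl Hr Dr HS chil chir dell delr
    by (unfold_locales; fact)
  have XL: "XL = (chil, 0, 0)" by (simp add: XL_def emb_l_def)
  have XR: "XR = (0, 0, chir)" by (simp add: XR_def emb_r_def)
  have DL: "DL = (0, dell, 0)" by (simp add: DL_def emb_S_def)
  have pos: "eventually (\<lambda>\<epsilon>. 0 < \<epsilon>) (at_right (0::real))" by (rule eventually_at_right_less)
  have evXL: "eventually (\<lambda>\<epsilon>. G nu XL XL (Complex E \<epsilon>) = green Dl Hl chil chil (Complex E \<epsilon>)) (at_right 0)" for nu E
    using pos by eventually_elim (simp add: G_def XL M.G_XL)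
  have evXR: "eventually (\<lambda>\<epsilon>. G 0 XR XR (Complex E \<epsilon>) = green Dr Hr chir chir (Complex E \<epsilon>)) (at_right 0)" for E
    using pos by eventually_elim (simp add: G_def XR M.G_XR0)
  have evDL: "eventually (\<lambda>\<epsilon>. G nu DL DL (Complex E \<epsilon>)
          * (1 - of_real (nu^2) * green UNIV HS delr delr (Complex E \<epsilon>) * green Dr Hr chir chir (Complex E \<epsilon>))
        = green UNIV HS dell dell (Complex E \<epsilon>) - of_real (nu^2) * green Dr Hr chir chir (Complex E \<epsilon>) *
          (green UNIV HS dell dell (Complex E \<epsilon>) * green UNIV HS delr delr (Complex E \<epsilon>)
            - green UNIV HS dell delr (Complex E \<epsilon>) * green UNIV HS delr dell (Complex E \<epsilon>))
      \<and> 1 - of_real (nu^2) * green UNIV HS delr delr (Complex E \<epsilon>) * green Dr Hr chir chir (Complex E \<epsilon>) \<noteq> 0)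
      (at_right 0)" for nu E
    using pos by eventually_elim (simp only: G_def DL, rule M.DL_identity, simp_all add: nz)
  have evDL0: "eventually (\<lambda>\<epsilon>. G 0 DL DL (Complex E \<epsilon>) = green UNIV HS dell dell (Complex E \<epsilon>)) (at_right 0)" for E
    using evDL[of 0 E] by eventually_elim simp
  have cont: "((\<lambda>\<epsilon>. green UNIV HS \<phi> \<psi> (Complex E \<epsilon>)) \<longlongrightarrow> GS \<phi> \<psi> E) (at_right 0)"
    if "E \<notin> real_spectrum UNIV HS" for \<phi> \<psi> E
    unfolding GS_def by (rule M.GS_cont[OF fin that])
  have notN: "E \<notin> real_spectrum UNIV HS \<and> GS dell dell E \<noteq> 0 \<and> GS delr delr E \<noteq> 0 \<and>
       GS dell delr E \<noteq> 0 \<and> dfun HS dell delr E \<noteq> 0 \<and>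
       dfun HS dell delr E - GS dell dell E * GS delr delr E \<noteq> 0" if "E \<notin> N" for E
  proof -
    have sp: "E \<notin> real_spectrum UNIV HS" and pr: "GS dell dell E * GS delr delr E * GS dell delr E * dfun HS dell delr E \<noteq> 0"
      using that by (auto simp: N_def Nset_def GS_def)
    have cc: "GS delr dell E = cnj (GS dell delr E)"
      unfolding GS_def by (rule M.S.green_cnj[OF M.HS_ex1_real[OF sp]])
    have "dfun HS dell delr E - GS dell dell E * GS delr delr E = - (GS dell delr E * cnj (GS dell delr E))"
      by (simp add: dfun_def GS_def flip: cc[unfolded GS_def])
    moreover have "GS dell delr E \<noteq> 0" using pr by auto
    ultimately show ?thesis using sp pr by auto
  qed
  have lim_dd: "((\<lambda>\<epsilon>. green UNIV HS dell dell (Complex E \<epsilon>) * green UNIV HS delr delr (Complex E \<epsilon>)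
            - green UNIV HS dell delr (Complex E \<epsilon>) * green UNIV HS delr dell (Complex E \<epsilon>))
          \<longlongrightarrow> dfun HS dell delr E) (at_right 0)" if "E \<notin> real_spectrum UNIV HS" for E
  proof -
    have "((\<lambda>\<epsilon>. green UNIV HS dell dell (Complex E \<epsilon>) * green UNIV HS delr delr (Complex E \<epsilon>)
            - green UNIV HS dell delr (Complex E \<epsilon>) * green UNIV HS delr dell (Complex E \<epsilon>))
          \<longlongrightarrow> GS dell dell E * GS delr delr E - GS dell delr E * GS delr dell E) (at_right 0)"
      by (intro tendsto_intros cont that)
    thus ?thesis by (simp add: dfun_def GS_def)
  qed
  have P1a: "C 0 XL DL \<subseteq> N"
  proof
    fix E assume "E \<in> C 0 XL DL"
    hence h: "((\<lambda>\<epsilon>. G 0 DL DL (Complex E \<epsilon>)) \<longlongrightarrow> 0) (at_right 0)"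
      by (simp add: C_def Cset_def G_def)
    show "E \<in> N"
    proof (cases "E \<in> real_spectrum UNIV HS")
      case True thus ?thesis by (simp add: N_def Nset_def)
    next
      case False
      have "((\<lambda>\<epsilon>. green UNIV HS dell dell (Complex E \<epsilon>)) \<longlongrightarrow> 0) (at_right 0)"
        using h tendsto_cong[OF evDL0[of E]] by simp
      from tendsto_unique[OF trivial_limit_at_right_real this cont[OF False]]
      have "GS dell dell E = 0" by simp
      thus ?thesis using False by (simp add: N_def Nset_def GS_def)
    qed
  qed
  have P1b: "C 0 DL XL \<subseteq> N"
  proof
    fix E assume "E \<in> C 0 DL XL"
    hence h: "filterlim (\<lambda>\<epsilon>. cmod (G 0 DL DL (Complex E \<epsilon>))) at_top (at_right 0)"
      by (simp add: C_def Cset_def G_def)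
    show "E \<in> N"
    proof (cases "E \<in> real_spectrum UNIV HS")
      case True thus ?thesis by (simp add: N_def Nset_def)
    next
      case False
      have "eventually (\<lambda>\<epsilon>. cmod (G 0 DL DL (Complex E \<epsilon>)) = cmod (green UNIV HS dell dell (Complex E \<epsilon>))) (at_right 0)"
        using evDL0[of E] by eventually_elim simp
      from filterlim_cong[OF refl refl this] h
      have "filterlim (\<lambda>\<epsilon>. cmod (green UNIV HS dell dell (Complex E \<epsilon>))) at_top (at_right 0)" by simp
      moreover have "((\<lambda>\<epsilon>. cmod (green UNIV HS dell dell (Complex E \<epsilon>))) \<longlongrightarrow> cmod (GS dell dell E)) (at_right 0)"
        by (intro tendsto_intros cont False)
      ultimately show ?thesis by (rule tendsto_at_top_absurd[THEN FalseE])
    qed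
  qed
  have fXL: "filterlim (\<lambda>\<epsilon>. cmod (G nu XL XL (Complex E \<epsilon>))) at_top (at_right 0) \<longleftrightarrow>
             filterlim (\<lambda>\<epsilon>. cmod (G 0 XL XL (Complex E \<epsilon>))) at_top (at_right 0)" for nu E
  proof -
    have "eventually (\<lambda>\<epsilon>. cmod (G nu XL XL (Complex E \<epsilon>)) = cmod (G 0 XL XL (Complex E \<epsilon>))) (at_right 0)"
      using evXL[of nu E] evXL[of 0 E] by eventually_elim simp
    thus ?thesis by (rule filterlim_cong[OF refl refl])
  qed
  have P2: "C nu XL DL - N =
           {E. E \<notin> N \<and>
               filterlim (\<lambda>\<epsilon>. cmod (G 0 XL XL (Complex E \<epsilon>))) at_top (at_right 0) \<and>
               ((\<lambda>\<epsilon>. G 0 XR XR (Complex E \<epsilon>)) \<longlongrightarrow>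
                  GS dell dell E / (complex_of_real (nu^2) * dfun HS dell delr E)) (at_right 0)}"
    if nu: "nu \<noteq> 0" for nu
  proof (rule set_eqI)
    fix E
    show "E \<in> C nu XL DL - N \<longleftrightarrow> E \<in> {E. E \<notin> N \<and>
               filterlim (\<lambda>\<epsilon>. cmod (G 0 XL XL (Complex E \<epsilon>))) at_top (at_right 0) \<and>
               ((\<lambda>\<epsilon>. G 0 XR XR (Complex E \<epsilon>)) \<longlongrightarrow>
                  GS dell dell E / (complex_of_real (nu^2) * dfun HS dell delr E)) (at_right 0)}"
    proof (cases "E \<in> N")
      case True thus ?thesis by simp
    next
      case False
      note nN = notN[OF False]
      have sp: "E \<notin> real_spectrum UNIV HS" using nN by simp
      have core: "((\<lambda>\<epsilon>. G nu DL DL (Complex E \<epsilon>)) \<longlongrightarrow> 0) (at_right 0) \<longleftrightarrow>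
          ((\<lambda>\<epsilon>. green Dr Hr chir chir (Complex E \<epsilon>)) \<longlongrightarrow>
             GS dell dell E / (complex_of_real (nu^2) * dfun HS dell delr E)) (at_right 0)"
        by (rule core2[OF evDL[of nu E] cont[OF sp] cont[OF sp] lim_dd[OF sp]])
           (use nu nN in auto)
      have xr: "((\<lambda>\<epsilon>. G 0 XR XR (Complex E \<epsilon>)) \<longlongrightarrow> L) (at_right 0) \<longleftrightarrow>
                ((\<lambda>\<epsilon>. green Dr Hr chir chir (Complex E \<epsilon>)) \<longlongrightarrow> L) (at_right 0)" for L
        by (rule tendsto_cong[OF evXR])
      show ?thesis using False core xr fXL[of nu E]
        by (simp add: C_def Cset_def G_def)
    qed
  qed
  have P3: "C nu DL XL - N =
           {E. E \<notin> N \<and>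
               ((\<lambda>\<epsilon>. cmod (G 0 XL XL (Complex E \<epsilon>))) \<longlongrightarrow> 0) (at_right 0) \<and>
               ((\<lambda>\<epsilon>. G 0 XR XR (Complex E \<epsilon>)) \<longlongrightarrow>
                  1 / (complex_of_real (nu^2) * GS delr delr E)) (at_right 0)}"
    if nu: "nu \<noteq> 0" for nu
  proof (rule set_eqI)
    fix E
    show "E \<in> C nu DL XL - N \<longleftrightarrow> E \<in> {E. E \<notin> N \<and>
               ((\<lambda>\<epsilon>. cmod (G 0 XL XL (Complex E \<epsilon>))) \<longlongrightarrow> 0) (at_right 0) \<and>
               ((\<lambda>\<epsilon>. G 0 XR XR (Complex E \<epsilon>)) \<longlongrightarrow>
                  1 / (complex_of_real (nu^2) * GS delr delr E)) (at_right 0)}"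
    proof (cases "E \<in> N")
      case True thus ?thesis by simp
    next
      case False
      note nN = notN[OF False]
      have sp: "E \<notin> real_spectrum UNIV HS" using nN by simp
      have core: "filterlim (\<lambda>\<epsilon>. cmod (G nu DL DL (Complex E \<epsilon>))) at_top (at_right 0) \<longleftrightarrow>
          ((\<lambda>\<epsilon>. green Dr Hr chir chir (Complex E \<epsilon>)) \<longlongrightarrow>
             1 / (complex_of_real (nu^2) * GS delr delr E)) (at_right 0)"
        by (rule core3[OF evDL[of nu E] cont[OF sp] cont[OF sp] lim_dd[OF sp]])
           (use nu nN in auto)
      have xr: "((\<lambda>\<epsilon>. G 0 XR XR (Complex E \<epsilon>)) \<longlongrightarrow> L) (at_right 0) \<longleftrightarrow>
                ((\<lambda>\<epsilon>. green Dr Hr chir chir (Complex E \<epsilon>)) \<longlongrightarrow> L) (at_right 0)" for L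
        by (rule tendsto_cong[OF evXR])
      have xl: "((\<lambda>\<epsilon>. G nu XL XL (Complex E \<epsilon>)) \<longlongrightarrow> 0) (at_right 0) \<longleftrightarrow>
                ((\<lambda>\<epsilon>. cmod (G 0 XL XL (Complex E \<epsilon>))) \<longlongrightarrow> 0) (at_right 0)"
      proof -
        have "eventually (\<lambda>\<epsilon>. G nu XL XL (Complex E \<epsilon>) = G 0 XL XL (Complex E \<epsilon>)) (at_right 0)"
          using evXL[of nu E] evXL[of 0 E] by eventually_elim simp
        thus ?thesis by (simp add: tendsto_cong tendsto_norm_zero_iff)
      qed
      have memC: "E \<in> C nu DL XL \<longleftrightarrow> filterlim (\<lambda>\<epsilon>. cmod (G nu DL DL (Complex E \<epsilon>))) at_top (at_right 0)
          \<and> ((\<lambda>\<epsilon>. G nu XL XL (Complex E \<epsilon>)) \<longlongrightarrow> 0) (at_right 0)"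
        by (simp add: C_def Cset_def G_def)
      show ?thesis by (simp only: Diff_iff mem_Collect_eq memC core xr xl) (use False in blast)
    qed
  qed
  show ?thesis using P1a P1b P2 P3 by blast
qed


end
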